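(* Let $B$ be a real number with $1\le B<\infty$ and $\varepsilon=2^{-B}$. Let $n\ge1$, $x^n\in\mathcal{X}^n$, and $\mathbf{P}^n=\mathbf{P}_1,\dots,\mathbf{P}_n$ a sequence of probability matrices over $\mathcal{P}_\varepsilon$ (with $m$ models; write $p_{k,i}$ for the $i$-th model distribution of $\mathbf{P}_k$). For $1\le k\le l\le n$ let $\ell^*(k,l,\textsc{best}):=\min_{1\le i\le m}\sum_{j=k}^l-\log_2p_{j,i}(x_j)$. Minima below range over all $1\le s\le n$ and integers $t_1=1<t_2<\dots<t_s<t_{s+1}=n+1$. Then for every $\mathbf{w}_1\in\mathcal{S}$, Algorithm $\textsc{mix-ogd}$ with parameter space $\mathcal{W}=\mathcal{S}$ satisfies, writing $L:=\ell(x^n,\textsc{mix-ogd}(\mathbf{w}_1,\alpha,x^n,\mathbf{P}^n))$: 1. for $\textsc{mix}=\textsc{lin}$ and $\alpha=\frac{8B}{17m4^B}$: $L\le\min_{s,t_2,\dots,t_s}\big[2\sum_{i=1}^s\ell^*(t_i,t_{i+1}-1,\textsc{best})+\frac{17ms4^B}{4B}\big]$; 2. for $\textsc{mix}=\textsc{lin}$ and $\alpha=\frac{8B/\sqrt n}{17m4^B}$: $L\le\min_{s,t_2,\dots,t_s}\big[\sum_{i=1}^s\ell^*(t_i,t_{i+1}-1,\textsc{best})+\frac{35ms4^B}{4B}\sqrt n\big]$; 3. for $\textsc{mix}=\textsc{geo}$ and $\alpha=\frac{10}{7mB^2}$: $L\le\min_{s,t_2,\dots,t_s}\big[2\sum_{i=1}^s\ell^*(t_i,t_{i+1}-1,\textsc{best})+\frac{7msB^2}{5}\big]$;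 4. for $\textsc{mix}=\textsc{geo}$ and $\alpha=\frac{10/\sqrt n}{7mB^2}$: $L\le\min_{s,t_2,\dots,t_s}\big[\sum_{i=1}^s\ell^*(t_i,t_{i+1}-1,\textsc{best})+\frac{19msB^2}{10}\sqrt n\big]$.
   Context: $\mathcal{X}=\{1,\dots,N\}$, $1<N<\infty$; $m>1$. $\mathcal{P}_\varepsilon$ is the set of probability distributions on $\mathcal{X}$ assigning probability at least $\varepsilon$ to every letter. A probability matrix over $\mathcal{P}_\varepsilon$ is $\mathbf{P}=(\mathbf{p}(1)\cdots\mathbf{p}(N))$ with $\mathbf{p}(x)=(p_1(x),\dots,p_m(x))^{\mathsf T}$, $p_i\in\mathcal{P}_\varepsilon$. $\mathcal{S}=\{\mathbf{w}\in\mathbb{R}^m:\mathbf{w}\ge0,\ \sum_iw_i=1\}$. $\ell(x,p):=-\log_2p(x)$. Linear mixture: $\textsc{lin}(x;\mathbf{w},\mathbf{P}):=\mathbf{w}^{\mathsf T}\mathbf{p}(x)$; geometric mixture: $\textsc{geo}(x;\mathbf{w},\mathbf{P}):=\prod_ip_i(x)^{w_i}/\sum_{y\in\mathcal{X}}\prod_ip_i(y)^{w_i}$. Algorithm $\textsc{mix-ogd}(\mathbf{w}_1,\alpha,x^n,\mathbf{P}^n)$ for a mixture $\textsc{mix}$ with parameter space $\mathcal{W}$: for $k=1,\dots,n$ code $x_k$ with $\ell(x_k,\textsc{mix}(\mathbf{w}_k,\mathbf{P}_k))$ bits and set $\mathbf{w}_{k+1}=\mathrm{proj}(\mathbf{w}_k-\alpha\nabla_{\mathbf{w}}\ell(x_k,\textsc{mix}(\mathbf{w},\mathbf{P}_k))|_{\mathbf{w}=\mathbf{w}_k};\mathcal{W})$,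 where $\mathrm{proj}(\mathbf{v};\mathcal{W})=\arg\min_{\mathbf{w}\in\mathcal{W}}\lvert\mathbf{v}-\mathbf{w}\rvert^2$ (Euclidean). Its total code length is $\ell(x^n,\textsc{mix-ogd}(\mathbf{w}_1,\alpha,x^n,\mathbf{P}^n)):=\sum_{k=1}^n\ell(x_k,\textsc{mix}(\mathbf{w}_k,\mathbf{P}_k))$. *)

theory Defs
  imports "HOL-Analysis.Analysis"
begin

text \<open>Alphabet: {1..N}. Models are indexed by a finite type 'm with CARD('m) = m.
 A probability matrix is P :: 'm => nat => real, P i = i-th model distribution.\<close>

definition in_P_eps :: "nat \<Rightarrow> real \<Rightarrow> (nat \<Rightarrow> real) \<Rightarrow> bool" where
  "in_P_eps N eps p \<longleftrightarrow> (\<forall>x\<in>{1..N}. eps \<le> p x) \<and> (\<Sum>x=1..N. p x) = 1"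

definition prob_matrix :: "nat \<Rightarrow> real \<Rightarrow> ('m::finite \<Rightarrow> nat \<Rightarrow> real) \<Rightarrow> bool" where
  "prob_matrix N eps P \<longleftrightarrow> (\<forall>i. in_P_eps N eps (P i))"

definition codelen :: "nat \<Rightarrow> (nat \<Rightarrow> real) \<Rightarrow> real" where
  "codelen x p = - log 2 (p x)"

definition prob_simplex :: "(real^'m::finite) set" where
  "prob_simplex = {w. (\<forall>i. 0 \<le> w $ i) \<and> (\<Sum>i\<in>UNIV. w $ i) = 1}"

definition pvec :: "('m::finite \<Rightarrow> nat \<Rightarrow> real) \<Rightarrow> nat \<Rightarrow> real^'m" where
  "pvec P x = (\<chi> i. P i x)"

definition lin_mix :: "real^'m::finite \<Rightarrow> ('m \<Rightarrow> nat \<Rightarrow> real) \<Rightarrow> nat \<Rightarrow> real" where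
  "lin_mix w P = (\<lambda>x. w \<bullet> pvec P x)"

definition geo_mix :: "nat \<Rightarrow> real^'m::finite \<Rightarrow> ('m \<Rightarrow> nat \<Rightarrow> real) \<Rightarrow> nat \<Rightarrow> real" where
  "geo_mix N w P = (\<lambda>x. (\<Prod>i\<in>UNIV. P i x powr (w $ i)) /
                         (\<Sum>y=1..N. \<Prod>i\<in>UNIV. P i y powr (w $ i)))"

definition proj :: "(real^'m::finite) set \<Rightarrow> real^'m \<Rightarrow> real^'m" where
  "proj W v = (SOME w. w \<in> W \<and> (\<forall>u\<in>W. (norm (v - w))\<^sup>2 \<le> (norm (v - u))\<^sup>2))"

definition grad :: "(real^'m::finite \<Rightarrow> real) \<Rightarrow> real^'m \<Rightarrow> real^'m" where
  "grad f w = (THE D. GDERIV f w :> D)"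

text \<open>ogd_w mix W w1 alpha x P k = w_(k+1) (the weight used to code x_(k+1)).\<close>
fun ogd_w :: "(real^'m::finite \<Rightarrow> ('m \<Rightarrow> nat \<Rightarrow> real) \<Rightarrow> nat \<Rightarrow> real) \<Rightarrow> (real^'m) set \<Rightarrow>
     real^'m \<Rightarrow> real \<Rightarrow> (nat \<Rightarrow> nat) \<Rightarrow> (nat \<Rightarrow> 'm \<Rightarrow> nat \<Rightarrow> real) \<Rightarrow> nat \<Rightarrow> real^'m" where
  "ogd_w mix W w1 \<alpha> x P 0 = w1"
| "ogd_w mix W w1 \<alpha> x P (Suc k) =
     proj W (ogd_w mix W w1 \<alpha> x P k
       - \<alpha> *\<^sub>R grad (\<lambda>w. codelen (x (Suc k)) (mix w (P (Suc k)))) (ogd_w mix W w1 \<alpha> x P k))"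

definition ogd_codelen :: "(real^'m::finite \<Rightarrow> ('m \<Rightarrow> nat \<Rightarrow> real) \<Rightarrow> nat \<Rightarrow> real) \<Rightarrow> (real^'m) set \<Rightarrow>
     real^'m \<Rightarrow> real \<Rightarrow> nat \<Rightarrow> (nat \<Rightarrow> nat) \<Rightarrow> (nat \<Rightarrow> 'm \<Rightarrow> nat \<Rightarrow> real) \<Rightarrow> real" where
  "ogd_codelen mix W w1 \<alpha> n x P =
     (\<Sum>k=1..n. codelen (x k) (mix (ogd_w mix W w1 \<alpha> x P (k - 1)) (P k)))"

definition best_len :: "(nat \<Rightarrow> nat) \<Rightarrow> (nat \<Rightarrow> 'm::finite \<Rightarrow> nat \<Rightarrow> real) \<Rightarrow> nat \<Rightarrow> nat \<Rightarrow> real" where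
  "best_len x P k l = (MIN i. \<Sum>j=k..l. - log 2 (P j i (x j)))"

definition segmentation :: "nat \<Rightarrow> nat \<Rightarrow> (nat \<Rightarrow> nat) \<Rightarrow> bool" where
  "segmentation n s t \<longleftrightarrow> 1 \<le> s \<and> s \<le> n \<and> t 1 = 1 \<and> t (s + 1) = n + 1 \<and>
     (\<forall>i\<in>{1..s}. t i < t (i + 1))"

definition seg_cost :: "(nat \<Rightarrow> nat) \<Rightarrow> (nat \<Rightarrow> 'm::finite \<Rightarrow> nat \<Rightarrow> real) \<Rightarrow> nat \<Rightarrow> (nat \<Rightarrow> nat) \<Rightarrow> real" where
  "seg_cost x P s t = (\<Sum>i=1..s. best_len x P (t i) (t (i + 1) - 1))"

end

theory Submission
  imports Defs
begin

lemma simplex_closed: "closed (prob_simplex :: (real^'m::finite) set)"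
proof -
  have "prob_simplex = (\<Inter>i. {w::real^'m. 0 \<le> w $ i}) \<inter> {w. (\<Sum>i\<in>UNIV. w $ i) = 1}"
    unfolding prob_simplex_def by auto
  moreover have "closed \<dots>"
    by (intro closed_Int closed_INT ballI closed_Collect_le closed_Collect_eq continuous_intros)
  ultimately show ?thesis by simp
qed

lemma simplex_convex: "convex (prob_simplex :: (real^'m::finite) set)"
  unfolding convex_def prob_simplex_def
  by (auto simp: sum.distrib sum_distrib_left[symmetric])

lemma simplex_ne: "(prob_simplex :: (real^'m::finite) set) \<noteq> {}"
proof -
  have "(\<chi> i. 1 / real CARD('m)) \<in> (prob_simplex :: (real^'m::finite) set)"
    unfolding prob_simplex_def by simp
  then show ?thesis by blast
qed

lemma norm_add_sq: "(norm (a + b))\<^sup>2 = (norm a)\<^sup>2 + (norm b)\<^sup>2 + 2 * inner a (b::'a::real_inner)"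
  unfolding power2_norm_eq_inner by (simp add: inner_add_left inner_add_right inner_commute)

lemma proj_nonexp:
  fixes v :: "real^'m::finite"
  assumes u: "u \<in> prob_simplex" shows "norm (proj prob_simplex v - u) \<le> norm (v - u)"
proof -
  let ?S = "prob_simplex :: (real^'m) set"
  define c where "c = closest_point ?S v"
  have c: "c \<in> ?S" "\<forall>y\<in>?S. dist v c \<le> dist v y"
    using closest_point_exists[OF simplex_closed simplex_ne] unfolding c_def by auto
  have ex: "\<exists>w. w \<in> ?S \<and> (\<forall>u\<in>?S. (norm (v - w))\<^sup>2 \<le> (norm (v - u))\<^sup>2)"
  proof (intro exI[of _ c] conjI ballI)
    show "c \<in> ?S" using c(1) .
    fix u assume "u \<in> ?S"
    then have "norm (v - c) \<le> norm (v - u)" using c(2) by (simp add: dist_norm)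
    then show "(norm (v - c))\<^sup>2 \<le> (norm (v - u))\<^sup>2" by (simp add: power_mono)
  qed
  define p where "p = proj ?S v"
  have p0: "p \<in> ?S \<and> (\<forall>u\<in>?S. (norm (v - p))\<^sup>2 \<le> (norm (v - u))\<^sup>2)"
    unfolding p_def proj_def by (rule someI_ex[OF ex])
  have p: "p \<in> ?S" "\<forall>u\<in>?S. (norm (v - p))\<^sup>2 \<le> (norm (v - u))\<^sup>2"
    using p0 by auto
  have d: "\<forall>z\<in>?S. dist v p \<le> dist v z"
    using p(2) by (auto simp: dist_norm intro: power2_le_imp_le)
  have "inner (v - p) (u - p) \<le> 0"
    by (rule any_closest_point_dot[OF simplex_convex simplex_closed p(1) u d])
  have "(norm (v - u))\<^sup>2 = (norm (v - p))\<^sup>2 + (norm (p - u))\<^sup>2 + 2 * inner (v - p) (p - u)"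
  proof -
    have eq: "v - p + (p - u) = v - u" by simp
    show ?thesis using norm_add_sq[of "v - p" "p - u"] unfolding eq .
  qed
  moreover have "inner (v - p) (p - u) \<ge> 0"
  proof -
    have "inner (v - p) (p - u) = - inner (v - p) (u - p)" by (simp add: inner_diff_right)
    then show ?thesis using \<open>inner (v - p) (u - p) \<le> 0\<close> by linarith
  qed
  ultimately have "(norm (p - u))\<^sup>2 \<le> (norm (v - u))\<^sup>2"
    using zero_le_power2[of "norm (v - p)"] by linarith
  then have "norm (p - u) \<le> norm (v - u)" by (rule power2_le_imp_le[OF _ norm_ge_zero])
  then show ?thesis unfolding p_def .
qed

lemma proj_in:
  fixes v :: "real^'m::finite"
  shows "proj prob_simplex v \<in> prob_simplex"
proof -
  let ?S = "prob_simplex :: (real^'m) set"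
  define c where "c = closest_point ?S v"
  have c: "c \<in> ?S" "\<forall>y\<in>?S. dist v c \<le> dist v y"
    using closest_point_exists[OF simplex_closed simplex_ne] unfolding c_def by auto
  have ex: "\<exists>w. w \<in> ?S \<and> (\<forall>u\<in>?S. (norm (v - w))\<^sup>2 \<le> (norm (v - u))\<^sup>2)"
  proof (intro exI[of _ c] conjI ballI)
    show "c \<in> ?S" using c(1) .
    fix u assume "u \<in> ?S"
    then have "norm (v - c) \<le> norm (v - u)" using c(2) by (simp add: dist_norm)
    then show "(norm (v - c))\<^sup>2 \<le> (norm (v - u))\<^sup>2" by (simp add: power_mono)
  qed
  have p0: "proj ?S v \<in> ?S \<and> (\<forall>u\<in>?S. (norm (v - proj ?S v))\<^sup>2 \<le> (norm (v - u))\<^sup>2)"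
    unfolding proj_def by (rule someI_ex[OF ex])
  then show ?thesis by blast
qed

lemma frac3: "(X - Y) / c + S + ((Y - Z) / c + T) = (X - Z) / c + (S + (T::real))"
  by (simp add: diff_divide_distrib)

lemma seg_mono:
  fixes t :: "nat \<Rightarrow> nat"
  assumes inc: "\<forall>i\<in>{1..s}. t i < (t (i + 1) :: nat)" and "1 \<le> i" "i \<le> j" "j \<le> s + 1"
  shows "t i \<le> t j"
  using assms(3,4)
proof (induction j rule: dec_induct)
  case base then show ?case by simp
next
  case (step j)
  then have "t j < t (j + 1)" using inc assms(2) by auto
  then show ?case using step by simp
qed

lemma seg_bounds:
  fixes t :: "nat \<Rightarrow> nat"
  assumes "segmentation n s t" "i \<in> {1..s}"
  shows "1 \<le> t i" "t i < t (i + 1)" "t (i + 1) \<le> n + 1"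
proof -
  have inc: "\<forall>i\<in>{1..s}. t i < t (i + 1)" and t1: "t 1 = 1" and ts: "t (s+1) = n + 1"
    using assms(1) unfolding segmentation_def by auto
  show "1 \<le> t i" using seg_mono[OF inc, of 1 i] assms(2) t1 by auto
  show "t i < t (i + 1)" using inc assms(2) by auto
  show "t (i + 1) \<le> n + 1" using seg_mono[OF inc, of "i+1" "s+1"] assms(2) ts by auto
qed

lemma seg_decomp:
  assumes "segmentation n s t"
  shows "(\<Sum>k=1..n. h k) = (\<Sum>i=1..s. \<Sum>k\<in>{t i..<t (i + 1)}. (h k :: real))"
proof -
  have inc: "\<forall>i\<in>{1..s}. t i < t (i + 1)" and t1: "t 1 = 1" and ts: "t (s+1) = n + 1"
    using assms(1) unfolding segmentation_def by auto
  have "\<forall>s'. s' \<le> s \<longrightarrow> (\<Sum>k\<in>{1..<t (s'+1)}. h k) = (\<Sum>i=1..s'. \<Sum>k\<in>{t i..<t (i + 1)}. h k)"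
  proof (intro allI)
    fix s' show "s' \<le> s \<longrightarrow> (\<Sum>k\<in>{1..<t (s'+1)}. h k) = (\<Sum>i=1..s'. \<Sum>k\<in>{t i..<t (i + 1)}. h k)"
    proof (induction s')
      case 0 then show ?case using t1 by simp
    next
      case (Suc s')
      show ?case
      proof
        assume le: "Suc s' \<le> s"
        have a: "1 \<le> t (s'+1)" using seg_mono[OF inc, of 1 "s'+1"] le t1 by auto
        have b: "t (s'+1) \<le> t (Suc s'+1)" using seg_mono[OF inc, of "s'+1" "Suc s'+1"] le by auto
        have "(\<Sum>k\<in>{1..<t (Suc s'+1)}. h k) = (\<Sum>k\<in>{1..<t (s'+1)}. h k) + (\<Sum>k\<in>{t (s'+1)..<t (Suc s'+1)}. h k)"
          using sum.atLeastLessThan_concat[OF a b, where g=h] by simp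
        then show "(\<Sum>k\<in>{1..<t (Suc s'+1)}. h k) = (\<Sum>i=1..Suc s'. \<Sum>k\<in>{t i..<t (i + 1)}. h k)"
          using Suc le by simp
      qed
    qed
  qed
  then have "(\<Sum>k\<in>{1..<t (s+1)}. h k) = (\<Sum>i=1..s. \<Sum>k\<in>{t i..<t (i + 1)}. h k)" by simp
  moreover have "{1..<t (s+1)} = {1..n}" using ts by auto
  ultimately show ?thesis by simp
qed

lemma seg_step:
  fixes w g :: "nat \<Rightarrow> real^'m::finite" and f :: "nat \<Rightarrow> real^'m \<Rightarrow> real" and u :: "real^'m"
  assumes al: "\<alpha> > 0"
    and step: "\<And>k. k \<in> {a..<b} \<Longrightarrow> norm (w k - u) \<le> norm (w (k-1) - \<alpha> *\<^sub>R g k - u)"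
    and conv: "\<And>k. k \<in> {a..<b} \<Longrightarrow> f k (w (k-1)) - f k u \<le> inner (g k) (w (k-1) - u)"
    and a1: "1 \<le> a" and ab: "a \<le> b"
  shows "(\<Sum>k\<in>{a..<b}. f k (w (k-1)) - f k u) \<le>
    ((norm (w (a-1) - u))\<^sup>2 - (norm (w (b-1) - u))\<^sup>2) / (2*\<alpha>) + (\<Sum>k\<in>{a..<b}. \<alpha>/2 * (norm (g k))\<^sup>2)"
  using ab step conv
proof (induction b rule: dec_induct)
  case base then show ?case by simp
next
  case (step b)
  have IH: "(\<Sum>k\<in>{a..<b}. f k (w (k-1)) - f k u) \<le>
    ((norm (w (a-1) - u))\<^sup>2 - (norm (w (b-1) - u))\<^sup>2) / (2*\<alpha>) + (\<Sum>k\<in>{a..<b}. \<alpha>/2 * (norm (g k))\<^sup>2)"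
    using step by auto
  have bin: "b \<in> {a..<Suc b}" using step by auto
  have st: "norm (w b - u) \<le> norm (w (b-1) - \<alpha> *\<^sub>R g b - u)" using step.prems(1)[OF bin] .
  have cv: "f b (w (b-1)) - f b u \<le> inner (g b) (w (b-1) - u)" using step.prems(2)[OF bin] .
  have e: "w (b-1) - \<alpha> *\<^sub>R g b - u = (w (b-1) - u) + (- \<alpha> *\<^sub>R g b)" by simp
  have sq: "(norm (w (b-1) - \<alpha> *\<^sub>R g b - u))\<^sup>2 =
     (norm (w (b-1) - u))\<^sup>2 + \<alpha>\<^sup>2 * (norm (g b))\<^sup>2 - 2 * \<alpha> * inner (g b) (w (b-1) - u)"
    unfolding e norm_add_sq by (simp add: power_mult_distrib inner_commute)
  have "(norm (w b - u))\<^sup>2 \<le> (norm (w (b-1) - \<alpha> *\<^sub>R g b - u))\<^sup>2"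
    using st by (simp add: power_mono)
  then have key: "inner (g b) (w (b-1) - u) \<le>
     ((norm (w (b-1) - u))\<^sup>2 - (norm (w b - u))\<^sup>2) / (2*\<alpha>) + \<alpha>/2 * (norm (g b))\<^sup>2"
    using al unfolding sq by (simp add: field_simps power2_eq_square)
  have "(\<Sum>k\<in>{a..<Suc b}. f k (w (k-1)) - f k u) = (\<Sum>k\<in>{a..<b}. f k (w (k-1)) - f k u) + (f b (w (b-1)) - f b u)"
    using step by simp
  also have "\<dots> \<le> ((norm (w (a-1) - u))\<^sup>2 - (norm (w (b-1) - u))\<^sup>2) / (2*\<alpha>) + (\<Sum>k\<in>{a..<b}. \<alpha>/2 * (norm (g k))\<^sup>2)
      + (((norm (w (b-1) - u))\<^sup>2 - (norm (w b - u))\<^sup>2) / (2*\<alpha>) + \<alpha>/2 * (norm (g b))\<^sup>2)"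
    using IH cv key by linarith
  also have "\<dots> = ((norm (w (a-1) - u))\<^sup>2 - (norm (w b - u))\<^sup>2) / (2*\<alpha>) + ((\<Sum>k\<in>{a..<b}. \<alpha>/2 * (norm (g k))\<^sup>2) + \<alpha>/2 * (norm (g b))\<^sup>2)"
    by (rule frac3)
  also have "\<dots> = ((norm (w (a-1) - u))\<^sup>2 - (norm (w (Suc b-1) - u))\<^sup>2) / (2*\<alpha>) + (\<Sum>k\<in>{a..<Suc b}. \<alpha>/2 * (norm (g k))\<^sup>2)"
    using step by simp
  finally show ?case .
qed

lemma simplex_le1: "w \<in> prob_simplex \<Longrightarrow> w $ i \<le> 1"
  unfolding prob_simplex_def
  using member_le_sum[of i UNIV "\<lambda>i. w $ i"] by auto

lemma vertex_simplex: "axis j 1 \<in> (prob_simplex :: (real^'m::finite) set)"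
  unfolding prob_simplex_def by (simp add: axis_def)

lemma dist_vertex:
  fixes w :: "real^'m::finite"
  assumes "w \<in> prob_simplex"
  shows "(norm (w - axis j 1))\<^sup>2 \<le> 2"
proof -
  have "(norm (w - axis j 1))\<^sup>2 = (\<Sum>i\<in>UNIV. (w $ i - axis j 1 $ i)\<^sup>2)"
    unfolding power2_norm_eq_inner inner_vec_def by (simp add: power2_eq_square)
  also have "\<dots> \<le> (\<Sum>i\<in>UNIV. w $ i + axis j (1::real) $ i)"
  proof (rule sum_mono)
    fix i
    have "0 \<le> w $ i" "w $ i \<le> 1" using assms simplex_le1[OF assms, of i] unfolding prob_simplex_def by auto
    then have A: "w $ i * w $ i \<le> w $ i" using mult_right_le_one_le[of "w $ i" "w $ i"] by simp
    have B: "(w $ i - 1) * (w $ i - 1) = w $ i * w $ i - 2 * w $ i + 1" by (simp add: algebra_simps)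
    show "(w $ i - axis j 1 $ i)\<^sup>2 \<le> w $ i + axis j (1::real) $ i"
      using A B \<open>0 \<le> w $ i\<close> by (cases "i = j") (auto simp: axis_def power2_eq_square)
  qed
  also have "\<dots> = 2" using assms vertex_simplex[of j] unfolding prob_simplex_def
    by (simp add: sum.distrib)
  finally show ?thesis .
qed

lemma ogd_tracking:
  fixes w g :: "nat \<Rightarrow> real^'m::finite" and f :: "nat \<Rightarrow> real^'m \<Rightarrow> real"
  assumes al: "\<alpha> > 0" and seg: "segmentation n s t"
    and inS: "\<And>k. k \<le> n \<Longrightarrow> w k \<in> prob_simplex"
    and step: "\<And>k u. k \<in> {1..n} \<Longrightarrow> u \<in> prob_simplex \<Longrightarrow> norm (w k - u) \<le> norm (w (k-1) - \<alpha> *\<^sub>R g k - u)"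
    and conv: "\<And>k j. k \<in> {1..n} \<Longrightarrow> f k (w (k-1)) - f k (axis j 1) \<le> inner (g k) (w (k-1) - axis j 1)"
  shows "(\<Sum>k=1..n. f k (w (k-1))) \<le> (\<Sum>i=1..s. MIN j. \<Sum>k=t i..t (i+1) - 1. f k (axis j 1))
           + s / \<alpha> + (\<Sum>k=1..n. \<alpha>/2 * (norm (g k))\<^sup>2)"
proof -
  have segi: "(\<Sum>k\<in>{t i..<t (i+1)}. f k (w (k-1))) \<le> (MIN j. \<Sum>k=t i..t (i+1) - 1. f k (axis j 1))
           + 1 / \<alpha> + (\<Sum>k\<in>{t i..<t (i+1)}. \<alpha>/2 * (norm (g k))\<^sup>2)" if i: "i \<in> {1..s}" for i
  proof -
    note bd = seg_bounds[OF seg i]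
    have ivl: "{t i..t (i+1) - 1} = {t i..<t (i+1)}" using bd by auto
    define F where "F = (\<lambda>j. \<Sum>k=t i..t (i+1) - 1. f k (axis j 1))"
    have "Min (range F) \<in> range F" by (rule Min_in) auto
    then obtain j where "Min (range F) = F j" by (rule rangeE)
    then have j: "(MIN j. \<Sum>k=t i..t (i+1) - 1. f k (axis j 1)) = (\<Sum>k=t i..t (i+1) - 1. f k (axis j 1))"
      unfolding F_def .
    have "(\<Sum>k\<in>{t i..<t (i+1)}. f k (w (k-1)) - f k (axis j 1)) \<le>
      ((norm (w (t i - 1) - axis j 1))\<^sup>2 - (norm (w (t (i+1) - 1) - axis j 1))\<^sup>2) / (2*\<alpha>) + (\<Sum>k\<in>{t i..<t (i+1)}. \<alpha>/2 * (norm (g k))\<^sup>2)"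
    proof (rule seg_step[OF al])
      fix k assume "k \<in> {t i..<t (i+1)}"
      then have k: "k \<in> {1..n}" using bd by auto
      show "norm (w k - axis j 1) \<le> norm (w (k-1) - \<alpha> *\<^sub>R g k - axis j 1)"
        by (rule step[OF k vertex_simplex])
      show "f k (w (k-1)) - f k (axis j 1) \<le> inner (g k) (w (k-1) - axis j 1)"
        by (rule conv[OF k])
    qed (use bd in auto)
    also have "((norm (w (t i - 1) - axis j 1))\<^sup>2 - (norm (w (t (i+1) - 1) - axis j 1))\<^sup>2) / (2*\<alpha>) \<le> 2 / (2 * \<alpha>)"
    proof (rule divide_right_mono)
      have "t i - 1 \<le> n" using bd by auto
      then have "(norm (w (t i - 1) - axis j 1))\<^sup>2 \<le> 2" using dist_vertex[OF inS[of "t i - 1"], of j] by auto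
      then show "(norm (w (t i - 1) - axis j 1))\<^sup>2 - (norm (w (t (i+1) - 1) - axis j 1))\<^sup>2 \<le> 2"
        using zero_le_power2[of "norm (w (t (i+1) - 1) - axis j 1)"] by linarith
    qed (use al in auto)
    finally have X: "(\<Sum>k\<in>{t i..<t (i+1)}. f k (w (k-1)) - f k (axis j 1)) \<le> 2 / (2 * \<alpha>) + (\<Sum>k\<in>{t i..<t (i+1)}. \<alpha>/2 * (norm (g k))\<^sup>2)" by simp
    have S: "(\<Sum>k\<in>{t i..<t (i+1)}. f k (w (k-1)) - f k (axis j 1)) = (\<Sum>k\<in>{t i..<t (i+1)}. f k (w (k-1))) - (\<Sum>k\<in>{t i..<t (i+1)}. f k (axis j 1))"
      by (simp add: sum_subtractf)
    have M: "(MIN j. \<Sum>k=t i..t (i+1) - 1. f k (axis j 1)) = (\<Sum>k\<in>{t i..<t (i+1)}. f k (axis j 1))"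
      using j unfolding ivl .
    have "2 / (2 * \<alpha>) = 1 / \<alpha>" using al by simp
    then show ?thesis using X S M by linarith
  qed
  have "(\<Sum>k=1..n. f k (w (k-1))) = (\<Sum>i=1..s. \<Sum>k\<in>{t i..<t (i+1)}. f k (w (k-1)))"
    by (rule seg_decomp[OF seg])
  also have "\<dots> \<le> (\<Sum>i=1..s. (MIN j. \<Sum>k=t i..t (i+1) - 1. f k (axis j 1))
           + 1 / \<alpha> + (\<Sum>k\<in>{t i..<t (i+1)}. \<alpha>/2 * (norm (g k))\<^sup>2))"
    by (rule sum_mono) (rule segi)
  also have "\<dots> = (\<Sum>i=1..s. MIN j. \<Sum>k=t i..t (i+1) - 1. f k (axis j 1)) + s / \<alpha>
       + (\<Sum>i=1..s. \<Sum>k\<in>{t i..<t (i+1)}. \<alpha>/2 * (norm (g k))\<^sup>2)"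
    by (simp add: sum.distrib)
  also have "(\<Sum>i=1..s. \<Sum>k\<in>{t i..<t (i+1)}. \<alpha>/2 * (norm (g k))\<^sup>2) = (\<Sum>k=1..n. \<alpha>/2 * (norm (g k))\<^sup>2)"
    by (rule seg_decomp[OF seg, symmetric])
  finally show ?thesis .
qed

lemma ln2_lower: "ln 2 \<ge> (0.6865::real)"
proof -
  have "(1 + (-0.6865::real) / real (40::nat)) ^ 40 \<le> exp (-0.6865)"
    by (rule exp_ge_one_plus_x_over_n_power_n) auto
  moreover have "(1/2::real) \<le> (1 + (-0.6865::real) / real (40::nat)) ^ 40"
    by (simp add: power_divide)
  ultimately have "1/2 \<le> exp (-0.6865::real)" by linarith
  then have "ln (1/2) \<le> ln (exp (-0.6865::real))" by (subst ln_le_cancel_iff) auto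
  then show ?thesis by (simp add: ln_div)
qed

lemma ln2_upper: "ln 2 \<le> (0.7::real)"
proof -
  have "(1 + (0.7::real) / real (40::nat)) ^ 40 \<le> exp 0.7"
    by (rule exp_ge_one_plus_x_over_n_power_n) auto
  moreover have "(2::real) \<le> (1 + (0.7::real) / real (40::nat)) ^ 40"
    by (simp add: power_divide)
  ultimately have "2 \<le> exp (0.7::real)" by linarith
  then have "ln 2 \<le> ln (exp (0.7::real))" by (subst ln_le_cancel_iff) auto
  then show ?thesis by simp
qed

lemma ln2_sq: "(ln 2)\<^sup>2 \<ge> (8/17::real)"
proof -
  have "(0.6865::real) * 0.6865 \<le> ln 2 * ln 2" using ln2_lower by (intro mult_mono) auto
  moreover have "(8/17::real) \<le> 0.6865 * 0.6865" by simp
  ultimately show ?thesis unfolding power2_eq_square by linarith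
qed

lemma ln_le_half: "0 < z \<Longrightarrow> ln z \<le> z / (2::real)"
proof -
  assume z: "0 < z"
  have "ln (z/2) \<le> z/2 - 1" using z by (intro ln_le_minus_one) auto
  moreover have "ln (z/2) = ln z - ln 2" using z by (simp add: ln_div)
  moreover have "ln 2 \<le> (1::real)" using ln2_upper by simp
  ultimately show ?thesis by linarith
qed

lemma eps_ln_le: "0 < \<epsilon> \<Longrightarrow> \<epsilon> * (- ln \<epsilon>) \<le> (1/2::real)"
proof -
  assume e: "0 < \<epsilon>"
  have "ln (1/\<epsilon>) \<le> (1/\<epsilon>)/2" using e by (intro ln_le_half) auto
  then have "- ln \<epsilon> \<le> 1 / (2 * \<epsilon>)" using e by (simp add: ln_div)
  then have "\<epsilon> * (- ln \<epsilon>) \<le> \<epsilon> * (1 / (2 * \<epsilon>))" using e by (intro mult_left_mono) auto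
  then show ?thesis using e by simp
qed

lemma low_region:
  fixes \<epsilon> y :: real
  assumes e: "0 < \<epsilon>" and ey: "\<epsilon> \<le> y" and y2: "y \<le> 1/2"
  shows "\<epsilon>\<^sup>2 * (- ln \<epsilon>) \<le> y\<^sup>2 * (- ln y)"
proof -
  define r where "r = y / \<epsilon>"
  have y0: "0 < y" using e ey by linarith
  have r1: "1 \<le> r" using e ey unfolding r_def by simp
  have yr: "y = r * \<epsilon>" using e unfolding r_def by simp
  have lny: "ln y = ln r + ln \<epsilon>" using e r1 unfolding yr by (simp add: ln_mult)
  define L where "L = - ln \<epsilon>"
  have "ln y \<le> ln (1/2)" using y0 y2 by simp
  then have L1: "ln r + ln 2 \<le> L" unfolding L_def lny by (simp add: ln_div)
  have lr: "ln r \<le> r - 1" using r1 by (intro ln_le_minus_one) auto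
  have lr0: "0 \<le> ln r" using r1 by simp
  have h2: "1/2 \<le> ln (2::real)" using ln2_lower by simp
  have r2: "0 \<le> r\<^sup>2 - 1" using r1 by (simp add: one_le_power)
  have "(r\<^sup>2 - 1) * (ln r + ln 2) \<le> (r\<^sup>2 - 1) * L" using r2 L1 by (intro mult_left_mono) auto
  moreover have "(r\<^sup>2 - 1) * (1/2) \<le> (r\<^sup>2 - 1) * ln 2" using r2 h2 by (intro mult_left_mono) auto
  moreover have "r - 1 \<le> (r\<^sup>2 - 1) * (1/2)"
  proof -
    have "0 \<le> (r - 1)\<^sup>2" by simp
    then show ?thesis by (simp add: power2_eq_square algebra_simps)
  qed
  ultimately have "r\<^sup>2 * ln r \<le> (r\<^sup>2 - 1) * L" using lr by (simp add: algebra_simps)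
  then have key: "L \<le> r\<^sup>2 * (L - ln r)" by (simp add: algebra_simps)
  have "\<epsilon>\<^sup>2 * L \<le> \<epsilon>\<^sup>2 * (r\<^sup>2 * (L - ln r))" using key by (intro mult_left_mono) auto
  also have "\<dots> = y\<^sup>2 * (- ln y)"
  proof -
    have "y\<^sup>2 * (- ln y) = (r * \<epsilon>)\<^sup>2 * (- (ln r + ln \<epsilon>))" using lny yr by simp
    then show ?thesis unfolding L_def by (simp add: power_mult_distrib algebra_simps)
  qed
  finally show ?thesis unfolding L_def .
qed

lemma poly_region:
  fixes \<epsilon> y :: real
  assumes e: "0 < \<epsilon>" "\<epsilon> \<le> 1/2" and y: "1/2 \<le> y" "y \<le> 1 - \<epsilon>"
  shows "\<epsilon> * (1 - \<epsilon>)\<^sup>2 / 2 \<le> y\<^sup>2 * (1 - y)"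
proof -
  define d where "d = 1 - y"
  have d: "\<epsilon> \<le> d" "d \<le> 1/2" using y unfolding d_def by auto
  have yd: "y = 1 - d" unfolding d_def by simp
  have pos: "0 \<le> \<epsilon> * (1 - \<epsilon>)\<^sup>2" using e by simp
  show ?thesis
  proof (cases "d \<le> 1/3")
    case True
    have a: "0 \<le> d - \<epsilon>" using d by simp
    have "d * \<epsilon> \<le> (1/3) * (1/3)" using True d e by (intro mult_mono) auto
    moreover have "(1/3) * (1/3) \<le> (1 - d - \<epsilon>) * (1 - d - \<epsilon>)"
      using True d e by (intro mult_mono) auto
    ultimately have b: "0 \<le> (1 - d - \<epsilon>)\<^sup>2 - d * \<epsilon>" by (simp add: power2_eq_square)
    have "d * (1 - d)\<^sup>2 - \<epsilon> * (1 - \<epsilon>)\<^sup>2 = (d - \<epsilon>) * ((1 - d - \<epsilon>)\<^sup>2 - d * \<epsilon>)"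
      by (simp add: power2_eq_square algebra_simps)
    also have "\<dots> \<ge> 0" using a b by simp
    finally have "\<epsilon> * (1 - \<epsilon>)\<^sup>2 \<le> d * (1 - d)\<^sup>2" by simp
    then show ?thesis unfolding yd using pos by (simp add: algebra_simps)
  next
    case False
    have "(1/3) * (1/2 * (1/2)) \<le> d * ((1 - d) * (1 - d))"
      using False d by (intro mult_mono) auto
    then have c: "1/12 \<le> (1 - d)\<^sup>2 * d" by (simp add: power2_eq_square algebra_simps)
    have "4/27 - \<epsilon> * (1 - \<epsilon>)\<^sup>2 = (\<epsilon> - 1/3)\<^sup>2 * (4/3 - \<epsilon>)"
      by (simp add: power2_eq_square algebra_simps)
    also have "\<dots> \<ge> 0" using e by simp
    finally have "\<epsilon> * (1 - \<epsilon>)\<^sup>2 \<le> 4/27" by simp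
    then show ?thesis unfolding yd using c by simp
  qed
qed

lemma lin_key:
  fixes \<epsilon> y :: real
  assumes e: "0 < \<epsilon>" "\<epsilon> \<le> 1/2" and y: "\<epsilon> \<le> y" "y \<le> 1 - \<epsilon>"
  shows "8 * (- ln \<epsilon>) * \<epsilon>\<^sup>2 * (1 - \<epsilon>)\<^sup>2 / (17 * (ln 2)\<^sup>2) \<le> y\<^sup>2 * (- ln y)"
proof -
  define c :: real where "c = 8 / (17 * (ln 2)\<^sup>2)"
  have l2: "0 < ln (2::real)" by simp
  have c1: "c \<le> 1" using ln2_sq l2 unfolding c_def by (simp add: field_simps)
  have c0: "0 \<le> c" unfolding c_def by simp
  define L where "L = - ln \<epsilon>"
  have L0: "0 \<le> L" using e unfolding L_def by simp
  have lhs: "8 * (- ln \<epsilon>) * \<epsilon>\<^sup>2 * (1 - \<epsilon>)\<^sup>2 / (17 * (ln 2)\<^sup>2) = c * L * \<epsilon>\<^sup>2 * (1 - \<epsilon>)\<^sup>2"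
    unfolding c_def L_def by simp
  have q: "0 \<le> (1 - \<epsilon>)\<^sup>2" "(1 - \<epsilon>)\<^sup>2 \<le> 1" using e by (auto simp: power_le_one)
  show ?thesis
  proof (cases "y \<le> 1/2")
    case True
    have "c * L * \<epsilon>\<^sup>2 * (1 - \<epsilon>)\<^sup>2 \<le> 1 * L * \<epsilon>\<^sup>2 * 1"
      using c0 c1 L0 q by (intro mult_mono) auto
    also have "\<dots> \<le> y\<^sup>2 * (- ln y)" using low_region[OF e(1) y(1) True] unfolding L_def by (simp add: mult.commute)
    finally show ?thesis using lhs by simp
  next
    case False
    have eL: "\<epsilon> * L \<le> 1/2" using eps_ln_le[OF e(1)] unfolding L_def .
    have "c * (\<epsilon> * L) \<le> 1 * (1/2)" using c0 c1 eL e L0 by (intro mult_mono) auto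
    then have "c * (\<epsilon> * L) * (\<epsilon> * (1 - \<epsilon>)\<^sup>2) \<le> (1/2) * (\<epsilon> * (1 - \<epsilon>)\<^sup>2)"
      using e q by (intro mult_right_mono) auto
    moreover have "c * L * \<epsilon>\<^sup>2 * (1 - \<epsilon>)\<^sup>2 = c * (\<epsilon> * L) * (\<epsilon> * (1 - \<epsilon>)\<^sup>2)"
      by (simp add: power2_eq_square)
    ultimately have "c * L * \<epsilon>\<^sup>2 * (1 - \<epsilon>)\<^sup>2 \<le> (1/2) * (\<epsilon> * (1 - \<epsilon>)\<^sup>2)" by linarith
    also have "\<dots> \<le> y\<^sup>2 * (1 - y)" using poly_region[OF e, of y] False y by simp
    also have "\<dots> \<le> y\<^sup>2 * (- ln y)"
    proof -
      have "ln y \<le> y - 1" using e y by (intro ln_le_minus_one) auto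
      then show ?thesis by (intro mult_left_mono) auto
    qed
    finally show ?thesis using lhs by simp
  qed
qed

lemma grad_eq:
  assumes "GDERIV f w :> D"
  shows "grad f w = D"
  unfolding grad_def
proof (rule the_equality)
  show "GDERIV f w :> D" by fact
  fix D' assume "GDERIV f w :> D'"
  then have "(\<lambda>h. inner h D') = (\<lambda>h. inner h D)"
    using assms unfolding gderiv_def by (rule has_derivative_unique)
  then have "inner (D' - D) D' = inner (D' - D) D" by meson
  then have "inner (D' - D) (D' - D) = 0" by (simp add: inner_diff_right)
  then show "D' = D" by simp
qed

lemma gderiv_inner: "GDERIV (\<lambda>w. inner w p) w :> p"
  unfolding gderiv_def by (auto intro!: derivative_eq_intros)

lemma lin_fun: "(\<lambda>w. codelen xk (lin_mix w Pk)) = (\<lambda>w. - log 2 (inner w (pvec Pk xk)))"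
  by (simp add: codelen_def lin_mix_def)

lemma lin_grad:
  assumes "0 < inner w (pvec Pk xk)"
  shows "grad (\<lambda>w. codelen xk (lin_mix w Pk)) w = (- (1 / (ln 2 * inner w (pvec Pk xk)))) *\<^sub>R pvec Pk xk"
proof -
  have d: "DERIV (\<lambda>y. - log 2 y) (inner w (pvec Pk xk)) :> - (1 / (ln 2 * inner w (pvec Pk xk)))"
    using DERIV_log[OF assms, of 2] by (intro DERIV_minus) auto
  show ?thesis unfolding lin_fun
    by (rule grad_eq, rule GDERIV_DERIV_compose[OF gderiv_inner d])
qed

lemma pvec_nth[simp]: "pvec P x $ i = P i x"
  by (simp add: pvec_def)

lemma in_P_bounds:
  fixes x :: nat
  assumes p: "in_P_eps N \<epsilon> p" and N: "1 < N" and e: "0 < \<epsilon>" and x: "x \<in> {1..N}"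
  shows "\<epsilon> \<le> p x" "p x \<le> 1 - \<epsilon>"
proof -
  show "\<epsilon> \<le> p x" using p x unfolding in_P_eps_def by auto
  define x' :: nat where "x' = (if x = 1 then 2 else 1)"
  have x': "x' \<in> {1..N} - {x}" using N x unfolding x'_def by auto
  have nn: "\<forall>z\<in>{1..N}. 0 \<le> p z" using p e unfolding in_P_eps_def by (auto intro: order.trans[of 0 \<epsilon>] less_imp_le)
  have "(\<Sum>z=1..N. p z) = p x + (\<Sum>z\<in>{1..N} - {x}. p z)"
    using x by (simp add: sum.remove)
  moreover have "p x' \<le> (\<Sum>z\<in>{1..N} - {x}. p z)"
    using x' nn by (intro member_le_sum) auto
  moreover have "\<epsilon> \<le> p x'" using p x' unfolding in_P_eps_def by auto
  ultimately show "p x \<le> 1 - \<epsilon>" using p unfolding in_P_eps_def by linarith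
qed

lemma simplex_combo_bounds:
  fixes w :: "real^'m::finite"
  assumes w: "w \<in> prob_simplex" and lo: "\<And>i. lo \<le> v $ i" and hi: "\<And>i. v $ i \<le> hi"
  shows "lo \<le> inner w v" "inner w v \<le> hi"
proof -
  have w0: "\<And>i. 0 \<le> w $ i" and w1: "(\<Sum>i\<in>UNIV. w $ i) = 1" using w unfolding prob_simplex_def by auto
  have "(\<Sum>i\<in>UNIV. w $ i * lo) \<le> (\<Sum>i\<in>UNIV. w $ i * v $ i)"
    using w0 lo by (intro sum_mono mult_left_mono) auto
  then show "lo \<le> inner w v" using w1 by (simp add: inner_vec_def sum_distrib_right[symmetric])
  have "(\<Sum>i\<in>UNIV. w $ i * v $ i) \<le> (\<Sum>i\<in>UNIV. w $ i * hi)"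
    using w0 hi by (intro sum_mono mult_left_mono) auto
  then show "inner w v \<le> hi" using w1 by (simp add: inner_vec_def sum_distrib_right[symmetric])
qed

lemma lin_facts:
  fixes Pk :: "'m::finite \<Rightarrow> nat \<Rightarrow> real" and w :: "real^'m"
  assumes PM: "prob_matrix N \<epsilon> Pk" and N: "1 < N" and e: "0 < \<epsilon>" and x: "xk \<in> {1..N}"
    and w: "w \<in> prob_simplex"
  defines "f \<equiv> (\<lambda>w. codelen xk (lin_mix w Pk))" and "y \<equiv> inner w (pvec Pk xk)"
  shows "\<epsilon> \<le> y" "y \<le> 1 - \<epsilon>" "f w = - log 2 y"
    and "\<And>j. f (axis j 1) = - log 2 (Pk j xk)"
    and "\<And>j. f w - f (axis j 1) \<le> inner (grad f w) (w - axis j 1)"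
    and "(norm (grad f w))\<^sup>2 \<le> real CARD('m) * (1 - \<epsilon>)\<^sup>2 / (ln 2 * y)\<^sup>2"
proof -
  have pb: "\<And>i. \<epsilon> \<le> Pk i xk" "\<And>i. Pk i xk \<le> 1 - \<epsilon>"
    using in_P_bounds[OF _ N e x] PM unfolding prob_matrix_def by auto
  show y1: "\<epsilon> \<le> y" "y \<le> 1 - \<epsilon>" unfolding y_def
    using simplex_combo_bounds[OF w, of \<epsilon> "pvec Pk xk" "1 - \<epsilon>"] pb by auto
  have y0: "0 < y" using y1 e by linarith
  show fw: "f w = - log 2 y" unfolding f_def y_def by (simp add: codelen_def lin_mix_def)
  show fe: "\<And>j. f (axis j 1) = - log 2 (Pk j xk)" unfolding f_def lin_fun by (simp add: inner_axis')
  have g: "grad f w = (- (1 / (ln 2 * y))) *\<^sub>R pvec Pk xk"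
    unfolding f_def y_def by (rule lin_grad) (use y0 y_def in simp)
  show "f w - f (axis j 1) \<le> inner (grad f w) (w - axis j 1)" for j
  proof -
    define z where "z = Pk j xk"
    have z0: "0 < z" using pb(1)[of j] e unfolding z_def by linarith
    have "inner (grad f w) (w - axis j 1) = - (1 / (ln 2 * y)) * (y - z)"
      unfolding g y_def z_def by (simp add: inner_diff_right inner_axis inner_commute[of "pvec Pk xk" w] diff_divide_distrib)
    also have "\<dots> = (z / y - 1) / ln 2" using y0 by (simp add: field_simps)
    finally have eq: "inner (grad f w) (w - axis j 1) = (z / y - 1) / ln 2" .
    have "ln (z / y) \<le> z / y - 1" using z0 y0 by (intro ln_le_minus_one) auto
    then have "ln (z / y) / ln 2 \<le> (z / y - 1) / ln 2" by (intro divide_right_mono) auto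
    moreover have "f w - f (axis j 1) = ln (z / y) / ln 2"
      unfolding fw fe z_def[symmetric] using z0 y0 by (simp add: log_def ln_div diff_divide_distrib)
    ultimately show ?thesis unfolding eq by simp
  qed
  have "(norm (grad f w))\<^sup>2 = (1 / (ln 2 * y))\<^sup>2 * (norm (pvec Pk xk))\<^sup>2"
    unfolding g by (simp add: power_divide power2_abs)
  also have "(norm (pvec Pk xk))\<^sup>2 = (\<Sum>i\<in>UNIV. (Pk i xk)\<^sup>2)"
    unfolding power2_norm_eq_inner inner_vec_def by (simp add: power2_eq_square)
  also have "\<dots> \<le> (\<Sum>i\<in>(UNIV::'m set). (1 - \<epsilon>)\<^sup>2)"
    using pb e by (intro sum_mono power_mono) (auto intro: order.trans[of 0 \<epsilon>] less_imp_le)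
  also have "\<dots> = real CARD('m) * (1 - \<epsilon>)\<^sup>2" by simp
  finally show "(norm (grad f w))\<^sup>2 \<le> real CARD('m) * (1 - \<epsilon>)\<^sup>2 / (ln 2 * y)\<^sup>2"
    by (simp add: power_divide mult.commute mult_left_mono divide_right_mono)
qed

lemma GDERIV_sum:
  assumes "finite Y" "\<And>y. y \<in> Y \<Longrightarrow> GDERIV (h y) w :> d y"
  shows "GDERIV (\<lambda>w. \<Sum>y\<in>Y. h y w) w :> (\<Sum>y\<in>Y. d y)"
  using assms
proof (induction Y rule: finite_induct)
  case empty then show ?case by (simp add: GDERIV_const)
next
  case (insert y Y)
  have "GDERIV (\<lambda>w. h y w + (\<Sum>y\<in>Y. h y w)) w :> d y + (\<Sum>y\<in>Y. d y)"
    using insert by (intro GDERIV_add) auto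
  then show ?case using insert by simp
qed

lemma jensen_exp:
  fixes q D :: "'a \<Rightarrow> real"
  assumes "finite Y" "\<And>y. y \<in> Y \<Longrightarrow> 0 \<le> q y" "(\<Sum>y\<in>Y. q y) = 1"
  shows "exp (\<Sum>y\<in>Y. q y * D y) \<le> (\<Sum>y\<in>Y. q y * exp (D y))"
proof -
  define M where "M = (\<Sum>y\<in>Y. q y * D y)"
  have "\<And>y. exp M * (1 + (D y - M)) \<le> exp (D y)"
  proof -
    fix y
    have "exp M * (1 + (D y - M)) \<le> exp M * exp (D y - M)"
      by (intro mult_left_mono) auto
    then show "exp M * (1 + (D y - M)) \<le> exp (D y)" by (simp add: exp_diff)
  qed
  then have "(\<Sum>y\<in>Y. q y * (exp M * (1 + (D y - M)))) \<le> (\<Sum>y\<in>Y. q y * exp (D y))"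
    using assms(2) by (intro sum_mono mult_left_mono) auto
  moreover have "(\<Sum>y\<in>Y. q y * (exp M * (1 + (D y - M)))) =
       exp M * ((\<Sum>y\<in>Y. q y) + (\<Sum>y\<in>Y. q y * D y) - M * (\<Sum>y\<in>Y. q y))"
    by (simp add: algebra_simps sum.distrib sum_subtractf sum_distrib_left sum_distrib_right)
  ultimately show ?thesis using assms(3) unfolding M_def by simp
qed

lemma geo_facts:
  fixes Pk :: "'m::finite \<Rightarrow> nat \<Rightarrow> real" and w :: "real^'m" and B :: real
  assumes PM: "prob_matrix N \<epsilon> Pk" and N: "1 < N" and e: "0 < \<epsilon>" and x: "xk \<in> {1..N}"
    and eB: "ln \<epsilon> = - B * ln 2"
  defines "f \<equiv> (\<lambda>w. codelen xk (geo_mix N w Pk))" and "q \<equiv> geo_mix N w Pk xk"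
  shows "0 < q" "q \<le> 1" "f w = - log 2 q"
    and "\<And>j. f (axis j 1) = - log 2 (Pk j xk)"
    and "\<And>j. f w - f (axis j 1) \<le> inner (grad f w) (w - axis j 1)"
    and "(norm (grad f w))\<^sup>2 \<le> real CARD('m) * B\<^sup>2 * (1 - q)\<^sup>2"
proof -
  define Y where "Y = {1..N}"
  have fY: "finite Y" unfolding Y_def by simp
  have xY: "xk \<in> Y" using x unfolding Y_def .
  have pb: "\<And>i y. y \<in> Y \<Longrightarrow> \<epsilon> \<le> Pk i y" "\<And>i y. y \<in> Y \<Longrightarrow> Pk i y \<le> 1 - \<epsilon>"
    using in_P_bounds[OF _ N e] PM unfolding prob_matrix_def Y_def by auto
  have ppos: "\<And>i y. y \<in> Y \<Longrightarrow> 0 < Pk i y" using pb(1) e by (meson less_le_trans)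
  have psum: "\<And>i. (\<Sum>y\<in>Y. Pk i y) = 1" using PM unfolding prob_matrix_def in_P_eps_def Y_def by auto
  define b where "b = (\<lambda>y. \<chi> i. ln (Pk i y))"
  define Z where "Z = (\<lambda>v. \<Sum>y\<in>Y. exp (inner v (b y)))"
  define F where "F = (\<lambda>v. (1 / ln 2) * (ln (Z v) - inner v (b xk)))"
  have Z0: "\<And>v. 0 < Z v" unfolding Z_def using xY fY
    by (intro sum_pos) auto
  have prodexp: "(\<Prod>i\<in>UNIV. Pk i y powr (v $ i)) = exp (inner v (b y))" if y: "y \<in> Y" for v y
  proof -
    have "(\<Prod>i\<in>UNIV. Pk i y powr (v $ i)) = (\<Prod>i\<in>UNIV. exp (v $ i * ln (Pk i y)))"
    proof (rule prod.cong)
      fix i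
      have nz: "Pk i y \<noteq> 0" using ppos[OF y, of i] by simp
      show "Pk i y powr (v $ i) = exp (v $ i * ln (Pk i y))" by (simp add: powr_def nz mult.commute)
    qed simp
    also have "\<dots> = exp (\<Sum>i\<in>UNIV. v $ i * ln (Pk i y))" by (simp add: exp_sum)
    also have "\<dots> = exp (inner v (b y))" unfolding b_def inner_vec_def by simp
    finally show ?thesis .
  qed
  have geo: "geo_mix N v Pk y = exp (inner v (b y)) / Z v" if y: "y \<in> Y" for v y
    unfolding geo_mix_def Z_def using prodexp y by (simp add: Y_def)
  have fF: "f = F"
  proof
    fix v
    have "f v = - log 2 (exp (inner v (b xk)) / Z v)" unfolding f_def codelen_def using geo[OF xY] by simp
    also have "\<dots> = F v" unfolding F_def log_def using Z0[of v] by (simp add: ln_div field_simps)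
    finally show "f v = F v" .
  qed
  define qq where "qq = (\<lambda>y. exp (inner w (b y)) / Z w)"
  have qq0: "\<And>y. 0 < qq y" unfolding qq_def using Z0 by simp
  have qqs: "(\<Sum>y\<in>Y. qq y) = 1" unfolding qq_def Z_def using Z0[of w] unfolding Z_def
    by (simp add: sum_divide_distrib[symmetric])
  have qx: "q = qq xk" unfolding q_def qq_def using geo[OF xY] .
  show "0 < q" using qq0 qx by simp
  show "q \<le> 1" using member_le_sum[of xk Y qq] qq0 qqs xY fY qx by (simp add: less_imp_le)
  show "f w = - log 2 q" unfolding f_def q_def codelen_def ..
  define gv where "gv = (1 / ln 2) *\<^sub>R ((\<Sum>y\<in>Y. qq y *\<^sub>R b y) - b xk)"
  have dZ: "GDERIV Z w :> (\<Sum>y\<in>Y. exp (inner w (b y)) *\<^sub>R b y)"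
    unfolding Z_def
    by (rule GDERIV_sum[OF fY]) (rule GDERIV_DERIV_compose[OF gderiv_inner DERIV_exp])
  have dlnZ: "GDERIV (\<lambda>v. ln (Z v)) w :> inverse (Z w) *\<^sub>R (\<Sum>y\<in>Y. exp (inner w (b y)) *\<^sub>R b y)"
    by (rule GDERIV_DERIV_compose[OF dZ DERIV_ln[OF Z0]])
  have dD: "GDERIV (\<lambda>v. ln (Z v) - inner v (b xk)) w :> inverse (Z w) *\<^sub>R (\<Sum>y\<in>Y. exp (inner w (b y)) *\<^sub>R b y) - b xk"
    by (rule GDERIV_diff[OF dlnZ gderiv_inner])
  have dF: "GDERIV F w :> gv"
  proof -
    have "GDERIV (\<lambda>v. (1 / ln 2) * (ln (Z v) - inner v (b xk))) w :>
       (1 / ln 2) *\<^sub>R (inverse (Z w) *\<^sub>R (\<Sum>y\<in>Y. exp (inner w (b y)) *\<^sub>R b y) - b xk) + (ln (Z w) - inner w (b xk)) *\<^sub>R 0"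
      by (rule GDERIV_mult[OF GDERIV_const dD])
    moreover have "inverse (Z w) *\<^sub>R (\<Sum>y\<in>Y. exp (inner w (b y)) *\<^sub>R b y) = (\<Sum>y\<in>Y. qq y *\<^sub>R b y)"
      unfolding qq_def by (simp add: scaleR_sum_right divide_inverse_commute)
    ultimately show ?thesis unfolding F_def gv_def by simp
  qed
  have g: "grad f w = gv" unfolding fF by (rule grad_eq[OF dF])
  show "f (axis j 1) = - log 2 (Pk j xk)" for j
  proof -
    have "Z (axis j 1) = (\<Sum>y\<in>Y. Pk j y)"
      unfolding Z_def b_def using ppos by (intro sum.cong) (auto simp: inner_axis')
    then have "Z (axis j 1) = 1" using psum by simp
    then show ?thesis unfolding fF F_def log_def b_def by (simp add: inner_axis')
  qed
  show "f w - f (axis j 1) \<le> inner (grad f w) (w - axis j 1)" for j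
  proof -
    define u :: "real^'m" where "u = axis j 1"
    define D where "D = (\<lambda>y. inner (u - w) (b y))"
    have Zu: "Z u = Z w * (\<Sum>y\<in>Y. qq y * exp (D y))"
    proof -
      have "Z u = (\<Sum>y\<in>Y. exp (inner w (b y)) * exp (D y))"
        unfolding Z_def D_def by (intro sum.cong) (auto simp: inner_diff_left exp_add[symmetric])
      also have "\<dots> = Z w * (\<Sum>y\<in>Y. qq y * exp (D y))"
        unfolding qq_def sum_distrib_left using Z0[of w] by (intro sum.cong) auto
      finally show ?thesis .
    qed
    have J: "exp (\<Sum>y\<in>Y. qq y * D y) \<le> (\<Sum>y\<in>Y. qq y * exp (D y))"
      by (rule jensen_exp[OF fY _ qqs]) (use qq0 in \<open>simp add: less_imp_le\<close>)
    have Spos: "0 < (\<Sum>y\<in>Y. qq y * exp (D y))" using fY xY qq0 by (intro sum_pos) auto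
    have "(\<Sum>y\<in>Y. qq y * D y) \<le> ln (\<Sum>y\<in>Y. qq y * exp (D y))"
      using J Spos by (subst ln_ge_iff) auto
    moreover have "ln (Z u) = ln (Z w) + ln (\<Sum>y\<in>Y. qq y * exp (D y))"
      unfolding Zu using Z0[of w] Spos by (simp add: ln_mult)
    ultimately have key: "ln (Z w) - ln (Z u) \<le> - (\<Sum>y\<in>Y. qq y * D y)" by linarith
    have ip: "inner gv (w - u) = (1 / ln 2) * ((\<Sum>y\<in>Y. qq y * inner (b y) (w - u)) - inner (b xk) (w - u))"
      unfolding gv_def by (simp add: inner_diff_left inner_sum_left)
    have sD: "- (\<Sum>y\<in>Y. qq y * D y) = (\<Sum>y\<in>Y. qq y * inner (b y) (w - u))"
      unfolding D_def by (simp add: sum_negf[symmetric] inner_diff_left inner_diff_right inner_commute algebra_simps)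
    have "F w - F u = (1 / ln 2) * ((ln (Z w) - ln (Z u)) - inner (b xk) (w - u))"
      unfolding F_def by (simp add: inner_diff_right inner_commute algebra_simps)
    also have "\<dots> \<le> (1 / ln 2) * ((\<Sum>y\<in>Y. qq y * inner (b y) (w - u)) - inner (b xk) (w - u))"
      using key sD by (intro mult_left_mono) auto
    finally show ?thesis unfolding u_def[symmetric] g unfolding fF ip .
  qed
  have B0: "0 \<le> B"
  proof -
    have "ln \<epsilon> \<le> \<epsilon> - 1" using e by (intro ln_le_minus_one)
    also have "\<dots> \<le> 0" using pb(1)[OF xY, of undefined] pb(2)[OF xY, of undefined] e by simp
    finally have "- B * ln 2 \<le> 0" using eB by simp
    then have "0 \<le> B * ln 2" by simp
    then show ?thesis using zero_le_mult_iff[of B "ln 2"] by simp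
  qed
  have comp: "\<bar>gv $ i\<bar> \<le> B * (1 - q)" for i
  proof -
    define c where "c = (\<lambda>y. ln (Pk i y))"
    have cb: "\<And>y. y \<in> Y \<Longrightarrow> - B * ln 2 \<le> c y \<and> c y \<le> 0"
    proof -
      fix y assume y: "y \<in> Y"
      have "ln \<epsilon> \<le> c y" unfolding c_def using pb(1)[OF y, of i] ppos[OF y, of i] e by simp
      moreover have "c y \<le> 0" unfolding c_def using pb(2)[OF y, of i] ppos[OF y, of i] e by simp
      ultimately show "- B * ln 2 \<le> c y \<and> c y \<le> 0" using eB by simp
    qed
    have gi: "gv $ i = (1 / ln 2) * (\<Sum>y\<in>Y. qq y * (c y - c xk))"
    proof -
      have "gv $ i = (1 / ln 2) * ((\<Sum>y\<in>Y. qq y * c y) - c xk)"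
        unfolding gv_def c_def b_def by (simp add: sum_component)
      also have "(\<Sum>y\<in>Y. qq y * c y) - c xk = (\<Sum>y\<in>Y. qq y * (c y - c xk))"
        using qqs by (simp add: right_diff_distrib sum_subtractf sum_distrib_right[symmetric])
      finally show ?thesis .
    qed
    have "\<bar>\<Sum>y\<in>Y. qq y * (c y - c xk)\<bar> \<le> (\<Sum>y\<in>Y. \<bar>qq y * (c y - c xk)\<bar>)" by (rule sum_abs)
    also have "\<dots> = (\<Sum>y\<in>Y - {xk}. \<bar>qq y * (c y - c xk)\<bar>)"
      using fY xY by (simp add: sum.remove)
    also have "\<dots> \<le> (\<Sum>y\<in>Y - {xk}. qq y * (B * ln 2))"
    proof (rule sum_mono)
      fix y assume y: "y \<in> Y - {xk}"
      have "\<bar>c y - c xk\<bar> \<le> B * ln 2" using cb[of y] cb[OF xY] y by auto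
      then show "\<bar>qq y * (c y - c xk)\<bar> \<le> qq y * (B * ln 2)"
        using qq0[of y] by (simp add: abs_mult mult_left_mono)
    qed
    also have "\<dots> = (1 - q) * (B * ln 2)"
      using qqs fY xY qx by (simp add: sum_distrib_right[symmetric] sum_diff1)
    finally have "\<bar>\<Sum>y\<in>Y. qq y * (c y - c xk)\<bar> \<le> (1 - q) * (B * ln 2)" .
    then have "\<bar>\<Sum>y\<in>Y. qq y * (c y - c xk)\<bar> / ln 2 \<le> (1 - q) * (B * ln 2) / ln 2"
      by (intro divide_right_mono) auto
    then show ?thesis unfolding gi by (simp add: abs_mult mult.commute)
  qed
  have q1: "0 \<le> 1 - q" using \<open>q \<le> 1\<close> by simp
  have "(norm (grad f w))\<^sup>2 = (\<Sum>i\<in>UNIV. (gv $ i)\<^sup>2)"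
    unfolding g power2_norm_eq_inner inner_vec_def by (simp add: power2_eq_square)
  also have "\<dots> \<le> (\<Sum>i\<in>(UNIV::'m set). (B * (1 - q))\<^sup>2)"
  proof (rule sum_mono)
    fix i
    have "\<bar>gv $ i\<bar>\<^sup>2 \<le> (B * (1 - q))\<^sup>2" using comp[of i] by (intro power_mono) auto
    then show "(gv $ i)\<^sup>2 \<le> (B * (1 - q))\<^sup>2" by simp
  qed
  also have "\<dots> = real CARD('m) * B\<^sup>2 * (1 - q)\<^sup>2" by (simp add: power_mult_distrib)
  finally show "(norm (grad f w))\<^sup>2 \<le> real CARD('m) * B\<^sup>2 * (1 - q)\<^sup>2" .
qed

lemma ogd_in:
  assumes "w1 \<in> prob_simplex"
  shows "ogd_w mix prob_simplex w1 \<alpha> x P k \<in> prob_simplex"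
  using assms by (cases k) (auto simp: proj_in)

lemma ogd_generic:
  fixes mix :: "real^'m::finite \<Rightarrow> ('m \<Rightarrow> nat \<Rightarrow> real) \<Rightarrow> nat \<Rightarrow> real"
    and P :: "nat \<Rightarrow> 'm \<Rightarrow> nat \<Rightarrow> real" and w1 :: "real^'m" and \<alpha> :: real and x :: "nat \<Rightarrow> nat"
  defines "W \<equiv> ogd_w mix prob_simplex w1 \<alpha> x P"
    and "fk \<equiv> (\<lambda>k v. codelen (x k) (mix v (P k)))"
  assumes al: "0 < \<alpha>" and seg: "segmentation n s t" and w1: "w1 \<in> prob_simplex"
    and conv: "\<And>k j. k \<in> {1..n} \<Longrightarrow> fk k (W (k-1)) - fk k (axis j 1) \<le> inner (grad (fk k) (W (k-1))) (W (k-1) - axis j 1)"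
    and vert: "\<And>k j. k \<in> {1..n} \<Longrightarrow> fk k (axis j 1) = - log 2 (P k j (x k))"
  shows "ogd_codelen mix prob_simplex w1 \<alpha> n x P \<le> seg_cost x P s t + s / \<alpha>
            + (\<Sum>k=1..n. \<alpha>/2 * (norm (grad (fk k) (W (k-1))))\<^sup>2)"
proof -
  define g where "g = (\<lambda>k. grad (fk k) (W (k-1)))"
  have L: "ogd_codelen mix prob_simplex w1 \<alpha> n x P = (\<Sum>k=1..n. fk k (W (k-1)))"
    unfolding ogd_codelen_def fk_def W_def ..
  have tr: "(\<Sum>k=1..n. fk k (W (k-1))) \<le> (\<Sum>i=1..s. MIN j. \<Sum>k=t i..t (i+1) - 1. fk k (axis j 1))
           + s / \<alpha> + (\<Sum>k=1..n. \<alpha>/2 * (norm (g k))\<^sup>2)"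
  proof (rule ogd_tracking[OF al seg])
    show "\<And>k. k \<le> n \<Longrightarrow> W k \<in> prob_simplex" unfolding W_def using ogd_in[OF w1] by blast
    fix k assume k: "k \<in> {1..n}"
    then obtain k' where ks: "k = Suc k'" by (cases k) auto
    have Wk: "W k = proj prob_simplex (W (k-1) - \<alpha> *\<^sub>R g k)"
      unfolding g_def fk_def W_def ks by simp
    show "\<And>u. u \<in> prob_simplex \<Longrightarrow> norm (W k - u) \<le> norm (W (k-1) - \<alpha> *\<^sub>R g k - u)"
      unfolding Wk by (rule proj_nonexp)
    show "\<And>j. fk k (W (k-1)) - fk k (axis j 1) \<le> inner (g k) (W (k-1) - axis j 1)"
      unfolding g_def using conv[OF k] .
  qed
  have "(\<Sum>i=1..s. MIN j. \<Sum>k=t i..t (i+1) - 1. fk k (axis j 1)) = seg_cost x P s t"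
    unfolding seg_cost_def best_len_def
  proof (rule sum.cong)
    fix i assume i: "i \<in> {1..s}"
    note bd = seg_bounds[OF seg i]
    have "(\<lambda>j. \<Sum>k=t i..t (i+1) - 1. fk k (axis j 1)) = (\<lambda>j. \<Sum>k=t i..t (i+1) - 1. - log 2 (P k j (x k)))"
    proof (rule ext, rule sum.cong)
      fix j k assume "k \<in> {t i..t (i+1) - 1}"
      then have "k \<in> {1..n}" using bd by auto
      then show "fk k (axis j 1) = - log 2 (P k j (x k))" by (rule vert)
    qed simp
    then show "(MIN j. \<Sum>k=t i..t (i+1) - 1. fk k (axis j 1)) = (MIN j. \<Sum>k=t i..t (i+1) - 1. - log 2 (P k j (x k)))"
      by (rule arg_cong[where f = "\<lambda>h. Min (range h)"])
  qed simp
  then show ?thesis using L tr unfolding g_def by simp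
qed

lemma eps_facts:
  fixes B :: real
  assumes B: "1 \<le> B"
  defines "\<epsilon> \<equiv> 2 powr (- B)"
  shows "0 < \<epsilon>" "\<epsilon> \<le> 1/2" "ln \<epsilon> = - B * ln 2" "4 powr B = 1 / \<epsilon>\<^sup>2" "B * \<epsilon> \<le> 1"
proof -
  show e0: "0 < \<epsilon>" unfolding \<epsilon>_def by simp
  have "2 powr (- B) \<le> 2 powr (-1::real)" using B by (intro powr_mono) auto
  then show "\<epsilon> \<le> 1/2" unfolding \<epsilon>_def by (simp add: powr_minus)
  show le: "ln \<epsilon> = - B * ln 2" unfolding \<epsilon>_def by simp
  have "ln (4::real) = 2 * ln 2"
  proof -
    have "ln (4::real) = ln (2 * 2)" by simp
    also have "\<dots> = 2 * ln 2" by (subst ln_mult) auto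
    finally show ?thesis .
  qed
  then have "4 powr B = exp (2 * (B * ln 2))" by (simp add: powr_def)
  moreover have "\<epsilon>\<^sup>2 = exp (- (2 * (B * ln 2)))"
    unfolding \<epsilon>_def by (simp add: powr_def power2_eq_square exp_add[symmetric])
  ultimately show "4 powr B = 1 / \<epsilon>\<^sup>2" by (simp add: exp_minus inverse_eq_divide)
  have "\<epsilon> * (- ln \<epsilon>) \<le> 1/2" by (rule eps_ln_le[OF e0])
  then have "\<epsilon> * B * ln 2 \<le> 1/2" unfolding le by simp
  moreover have "\<epsilon> * B * (1/2) \<le> \<epsilon> * B * ln 2"
    using ln2_lower e0 B by (intro mult_left_mono) auto
  ultimately show "B * \<epsilon> \<le> 1" by (simp add: mult.commute)
qed

lemma lin_step_i:
  fixes B m y G :: real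
  assumes B: "1 \<le> B" and m: "0 < m" and y: "2 powr (- B) \<le> y" "y \<le> 1 - 2 powr (- B)"
    and G: "G \<le> m * (1 - 2 powr (- B))\<^sup>2 / (ln 2 * y)\<^sup>2"
  shows "8 * B / (17 * m * 4 powr B) * G \<le> - log 2 y"
proof -
  define \<epsilon> where "\<epsilon> = 2 powr (- B)"
  note ef = eps_facts[OF B, folded \<epsilon>_def]
  have y0: "0 < y" using y ef unfolding \<epsilon>_def by linarith
  have l2: "0 < ln (2::real)" by simp
  define K where "K = 8 * (- ln \<epsilon>) * \<epsilon>\<^sup>2 * (1 - \<epsilon>)\<^sup>2 / (17 * (ln 2)\<^sup>2)"
  have key: "K \<le> y\<^sup>2 * (- ln y)" unfolding K_def
    by (rule lin_key) (use ef y in \<open>auto simp: \<epsilon>_def\<close>)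
  have a0: "0 \<le> 8 * B / (17 * m * 4 powr B)" using B m by simp
  have "8 * B / (17 * m * 4 powr B) * G \<le> 8 * B / (17 * m * 4 powr B) * (m * (1 - \<epsilon>)\<^sup>2 / (ln 2 * y)\<^sup>2)"
    using G a0 unfolding \<epsilon>_def by (intro mult_left_mono) auto
  also have "\<dots> = K / (ln 2 * y\<^sup>2)"
    unfolding K_def ef(4) ef(3) using m y0 l2 ef(1)
    by (simp add: field_simps power2_eq_square)
  also have "\<dots> \<le> y\<^sup>2 * (- ln y) / (ln 2 * y\<^sup>2)"
    using key y0 l2 by (intro divide_right_mono) auto
  also have "\<dots> = - log 2 y" using y0 by (simp add: log_def)
  finally show ?thesis .
qed

lemma case_i:
  fixes N n :: nat and B :: real and x :: "nat \<Rightarrow> nat"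
    and P :: "nat \<Rightarrow> 'm::finite \<Rightarrow> nat \<Rightarrow> real" and w1 :: "real^'m"
  assumes N: "1 < N" and B: "1 \<le> B"
    and X: "\<forall>k\<in>{1..n}. x k \<in> {1..N}"
    and PM: "\<forall>k\<in>{1..n}. prob_matrix N (2 powr (- B)) (P k)"
    and w1: "w1 \<in> prob_simplex" and seg: "segmentation n s t"
  shows "ogd_codelen lin_mix prob_simplex w1 (8 * B / (17 * CARD('m) * 4 powr B)) n x P
         \<le> 2 * seg_cost x P s t + 17 * CARD('m) * s * 4 powr B / (4 * B)"
proof -
  define \<alpha> :: real where "\<alpha> = 8 * B / (17 * CARD('m) * 4 powr B)"
  define m :: real where "m = real CARD('m)"
  have m0: "0 < m" unfolding m_def by simp
  have am: "\<alpha> = 8 * B / (17 * m * 4 powr B)" unfolding \<alpha>_def m_def by simp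
  have al: "0 < \<alpha>" unfolding am using B m0 by simp
  define W where "W = ogd_w lin_mix prob_simplex w1 \<alpha> x P"
  define fk where "fk = (\<lambda>k v. codelen (x k) (lin_mix v (P k)))"
  note ef = eps_facts[OF B]
  have LF: "\<And>k. k \<in> {1..n} \<Longrightarrow>
     2 powr (- B) \<le> inner (W (k-1)) (pvec (P k) (x k)) \<and> inner (W (k-1)) (pvec (P k) (x k)) \<le> 1 - 2 powr (- B)
     \<and> fk k (W (k-1)) = - log 2 (inner (W (k-1)) (pvec (P k) (x k)))
     \<and> (\<forall>j. fk k (axis j 1) = - log 2 (P k j (x k)))
     \<and> (\<forall>j. fk k (W (k-1)) - fk k (axis j 1) \<le> inner (grad (fk k) (W (k-1))) (W (k-1) - axis j 1))
     \<and> (norm (grad (fk k) (W (k-1))))\<^sup>2 \<le> m * (1 - 2 powr (- B))\<^sup>2 / (ln 2 * inner (W (k-1)) (pvec (P k) (x k)))\<^sup>2"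
  proof -
    fix k assume k: "k \<in> {1..n}"
    have Wi: "W (k-1) \<in> prob_simplex" unfolding W_def by (rule ogd_in[OF w1])
    note lf = lin_facts[OF PM[rule_format, OF k] N ef(1) X[rule_format, OF k] Wi]
    show "?thesis k" using lf unfolding fk_def m_def by blast
  qed
  have gen: "ogd_codelen lin_mix prob_simplex w1 \<alpha> n x P \<le> seg_cost x P s t + s / \<alpha>
            + (\<Sum>k=1..n. \<alpha>/2 * (norm (grad (fk k) (W (k-1))))\<^sup>2)"
  proof -
    have conv: "\<And>k j. k \<in> {1..n} \<Longrightarrow> fk k (W (k-1)) - fk k (axis j 1) \<le> inner (grad (fk k) (W (k-1))) (W (k-1) - axis j 1)"
      using LF by blast
    have vert: "\<And>k j. k \<in> {1..n} \<Longrightarrow> fk k (axis j 1) = - log 2 (P k j (x k))" using LF by blast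
    show ?thesis unfolding fk_def W_def
      by (rule ogd_generic[OF al seg w1 conv[unfolded fk_def W_def] vert[unfolded fk_def W_def]])
  qed
  have L: "ogd_codelen lin_mix prob_simplex w1 \<alpha> n x P = (\<Sum>k=1..n. fk k (W (k-1)))"
    unfolding ogd_codelen_def fk_def W_def ..
  have "(\<Sum>k=1..n. \<alpha>/2 * (norm (grad (fk k) (W (k-1))))\<^sup>2) \<le> (\<Sum>k=1..n. fk k (W (k-1)) / 2)"
  proof (rule sum_mono)
    fix k assume k: "k \<in> {1..n}"
    note lf = LF[OF k]
    have "\<alpha> * (norm (grad (fk k) (W (k-1))))\<^sup>2 \<le> - log 2 (inner (W (k-1)) (pvec (P k) (x k)))"
      unfolding am by (rule lin_step_i[OF B m0]) (use lf in auto)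
    then have "\<alpha> * (norm (grad (fk k) (W (k-1))))\<^sup>2 \<le> fk k (W (k-1))" using lf by simp
    then show "\<alpha>/2 * (norm (grad (fk k) (W (k-1))))\<^sup>2 \<le> fk k (W (k-1)) / 2" by simp
  qed
  also have "\<dots> = ogd_codelen lin_mix prob_simplex w1 \<alpha> n x P / 2"
    unfolding L by (simp add: sum_divide_distrib)
  finally have "ogd_codelen lin_mix prob_simplex w1 \<alpha> n x P \<le> 2 * seg_cost x P s t + 2 * (s / \<alpha>)"
    using gen by linarith
  also have "2 * (s / \<alpha>) = 17 * CARD('m) * s * 4 powr B / (4 * B)"
    unfolding \<alpha>_def using B by (simp add: field_simps)
  finally show ?thesis unfolding \<alpha>_def .
qed

lemma case_ii:
  fixes N n :: nat and B :: real and x :: "nat \<Rightarrow> nat"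
    and P :: "nat \<Rightarrow> 'm::finite \<Rightarrow> nat \<Rightarrow> real" and w1 :: "real^'m"
  assumes N: "1 < N" and B: "1 \<le> B" and n1: "1 \<le> n"
    and X: "\<forall>k\<in>{1..n}. x k \<in> {1..N}"
    and PM: "\<forall>k\<in>{1..n}. prob_matrix N (2 powr (- B)) (P k)"
    and w1: "w1 \<in> prob_simplex" and seg: "segmentation n s t"
  shows "ogd_codelen lin_mix prob_simplex w1 ((8 * B / sqrt n) / (17 * CARD('m) * 4 powr B)) n x P
         \<le> seg_cost x P s t + 35 * CARD('m) * s * 4 powr B / (4 * B) * sqrt n"
proof -
  define \<alpha> :: real where "\<alpha> = (8 * B / sqrt n) / (17 * CARD('m) * 4 powr B)"
  define m :: real where "m = real CARD('m)"
  define \<epsilon> :: real where "\<epsilon> = 2 powr (- B)"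
  have m1: "1 \<le> m" unfolding m_def by simp
  have m0: "0 < m" using m1 by simp
  have sn: "0 < sqrt (real n)" "1 \<le> sqrt (real n)" using n1 by auto
  have am: "\<alpha> = (8 * B / sqrt n) / (17 * m * 4 powr B)" unfolding \<alpha>_def m_def by simp
  have al: "0 < \<alpha>" unfolding am using B m0 sn by simp
  define W where "W = ogd_w lin_mix prob_simplex w1 \<alpha> x P"
  define fk where "fk = (\<lambda>k v. codelen (x k) (lin_mix v (P k)))"
  note ef = eps_facts[OF B, folded \<epsilon>_def]
  have LF: "\<And>k. k \<in> {1..n} \<Longrightarrow>
     \<epsilon> \<le> inner (W (k-1)) (pvec (P k) (x k)) \<and> inner (W (k-1)) (pvec (P k) (x k)) \<le> 1 - \<epsilon>
     \<and> fk k (W (k-1)) = - log 2 (inner (W (k-1)) (pvec (P k) (x k)))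
     \<and> (\<forall>j. fk k (axis j 1) = - log 2 (P k j (x k)))
     \<and> (\<forall>j. fk k (W (k-1)) - fk k (axis j 1) \<le> inner (grad (fk k) (W (k-1))) (W (k-1) - axis j 1))
     \<and> (norm (grad (fk k) (W (k-1))))\<^sup>2 \<le> m * (1 - \<epsilon>)\<^sup>2 / (ln 2 * inner (W (k-1)) (pvec (P k) (x k)))\<^sup>2"
  proof -
    fix k assume k: "k \<in> {1..n}"
    have Wi: "W (k-1) \<in> prob_simplex" unfolding W_def by (rule ogd_in[OF w1])
    note lf = lin_facts[OF PM[rule_format, OF k, folded \<epsilon>_def] N ef(1) X[rule_format, OF k] Wi]
    show "?thesis k" using lf unfolding fk_def m_def by blast
  qed
  have gen: "ogd_codelen lin_mix prob_simplex w1 \<alpha> n x P \<le> seg_cost x P s t + s / \<alpha>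
            + (\<Sum>k=1..n. \<alpha>/2 * (norm (grad (fk k) (W (k-1))))\<^sup>2)"
  proof -
    have conv: "\<And>k j. k \<in> {1..n} \<Longrightarrow> fk k (W (k-1)) - fk k (axis j 1) \<le> inner (grad (fk k) (W (k-1))) (W (k-1) - axis j 1)"
      using LF by blast
    have vert: "\<And>k j. k \<in> {1..n} \<Longrightarrow> fk k (axis j 1) = - log 2 (P k j (x k))" using LF by blast
    show ?thesis unfolding fk_def W_def
      by (rule ogd_generic[OF al seg w1 conv[unfolded fk_def W_def] vert[unfolded fk_def W_def]])
  qed
  have l2: "0 < ln (2::real)" by simp
  have "(\<Sum>k=1..n. \<alpha>/2 * (norm (grad (fk k) (W (k-1))))\<^sup>2) \<le> (\<Sum>k=1..n. B / (2 * sqrt n))"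
  proof (rule sum_mono)
    fix k assume k: "k \<in> {1..n}"
    note lf = LF[OF k]
    define y where "y = inner (W (k-1)) (pvec (P k) (x k))"
    have y: "\<epsilon> \<le> y" using lf unfolding y_def by simp
    have G: "(norm (grad (fk k) (W (k-1))))\<^sup>2 \<le> m * (1 - \<epsilon>)\<^sup>2 / (ln 2 * y)\<^sup>2" using lf unfolding y_def by simp
    have "m * (1 - \<epsilon>)\<^sup>2 / (ln 2 * y)\<^sup>2 \<le> m * 1 / (ln 2 * \<epsilon>)\<^sup>2"
    proof (rule frac_le)
      show "m * (1 - \<epsilon>)\<^sup>2 \<le> m * 1" using m0 ef by (intro mult_left_mono) (auto simp: power_le_one)
      show "0 < (ln 2 * \<epsilon>)\<^sup>2" using ef l2 by simp
      show "(ln 2 * \<epsilon>)\<^sup>2 \<le> (ln 2 * y)\<^sup>2" using y ef l2 by (intro power_mono mult_left_mono) auto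
    qed (use m0 in auto)
    then have G2: "(norm (grad (fk k) (W (k-1))))\<^sup>2 \<le> m / (ln 2 * \<epsilon>)\<^sup>2" using G by simp
    have "\<alpha>/2 * (norm (grad (fk k) (W (k-1))))\<^sup>2 \<le> \<alpha>/2 * (m / (ln 2 * \<epsilon>)\<^sup>2)"
      using G2 al by (intro mult_left_mono) auto
    also have "\<dots> = 4 * B / (sqrt n * (17 * (ln 2)\<^sup>2))"
      unfolding am ef(4) using m0 ef(1) sn l2 by (simp add: field_simps power2_eq_square)
    also have "\<dots> \<le> B / (2 * sqrt n)"
    proof -
      have h8: "8 \<le> 17 * (ln (2::real))\<^sup>2" using ln2_sq by simp
      have A: "B * 8 \<le> B * (17 * (ln (2::real))\<^sup>2)" using mult_left_mono[OF h8, of B] B by simp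
      have "B * 8 * sqrt n \<le> B * (17 * (ln (2::real))\<^sup>2) * sqrt n" by (rule mult_right_mono[OF A]) (use sn in simp)
      then have "4 * B * (2 * sqrt n) \<le> B * (sqrt n * (17 * (ln 2)\<^sup>2))" by (simp add: algebra_simps)
      moreover have "0 < sqrt n * (17 * (ln 2)\<^sup>2)" "0 < 2 * sqrt n" using sn l2 by auto
      ultimately show ?thesis using A by (simp add: divide_le_eq le_divide_eq mult.commute mult.left_commute)
    qed
    finally show "\<alpha>/2 * (norm (grad (fk k) (W (k-1))))\<^sup>2 \<le> B / (2 * sqrt n)" .
  qed
  also have "\<dots> = B * sqrt n / 2"
  proof -
    have "real n = sqrt n * sqrt n" by simp
    then show ?thesis using sn by (simp add: field_simps)
  qed
  finally have S: "(\<Sum>k=1..n. \<alpha>/2 * (norm (grad (fk k) (W (k-1))))\<^sup>2) \<le> B * sqrt n / 2" .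
  have sa: "s / \<alpha> = 17 * m * s * 4 powr B * sqrt n / (8 * B)"
    unfolding am using B sn by (simp add: field_simps)
  have s1: "1 \<le> real s" using seg unfolding segmentation_def by simp
  have "B * B \<le> 4 powr B"
  proof -
    have "(B * \<epsilon>) * (B * \<epsilon>) \<le> 1 * 1" using ef B by (intro mult_mono) auto
    then show ?thesis unfolding ef(4) using ef(1) by (simp add: field_simps power2_eq_square)
  qed
  also have "\<dots> \<le> m * s * 4 powr B"
  proof -
    have "1 * 1 \<le> m * s" using m1 s1 by (intro mult_mono) auto
    then show ?thesis using mult_right_mono[of 1 "m * s" "4 powr B"] by simp
  qed
  finally have BB: "B * B \<le> m * s * 4 powr B" .
  have "B * sqrt n / 2 \<le> 53 * m * s * 4 powr B * sqrt n / (8 * B)"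
  proof -
    have "B * sqrt n * (8 * B) \<le> 53 * m * s * 4 powr B * sqrt n * 2"
    proof -
      have "B * B * (8 * sqrt n) \<le> (m * s * 4 powr B) * (106 * sqrt n)"
        by (rule mult_mono[OF BB]) (use sn B m0 in auto)
      then show ?thesis by (simp add: algebra_simps)
    qed
    then show ?thesis using B by (simp add: divide_simps mult_ac)
  qed
  then have "ogd_codelen lin_mix prob_simplex w1 \<alpha> n x P \<le> seg_cost x P s t + 17 * m * s * 4 powr B * sqrt n / (8 * B) + 53 * m * s * 4 powr B * sqrt n / (8 * B)"
    using gen S sa by linarith
  also have "seg_cost x P s t + 17 * m * s * 4 powr B * sqrt n / (8 * B) + 53 * m * s * 4 powr B * sqrt n / (8 * B) = seg_cost x P s t + 35 * CARD('m) * s * 4 powr B / (4 * B) * sqrt n"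
    unfolding m_def using B by (simp add: field_simps)
  finally show ?thesis unfolding \<alpha>_def .
qed

lemma geo_LF:
  fixes N n :: nat and B \<alpha> :: real and x :: "nat \<Rightarrow> nat"
    and P :: "nat \<Rightarrow> 'm::finite \<Rightarrow> nat \<Rightarrow> real" and w1 :: "real^'m"
  assumes N: "1 < N" and B: "1 \<le> B"
    and X: "\<forall>k\<in>{1..n}. x k \<in> {1..N}"
    and PM: "\<forall>k\<in>{1..n}. prob_matrix N (2 powr (- B)) (P k)"
    and w1: "w1 \<in> prob_simplex" and k: "k \<in> {1..n}"
  defines "W \<equiv> ogd_w (geo_mix N) prob_simplex w1 \<alpha> x P"
    and "fk \<equiv> (\<lambda>k v. codelen (x k) (geo_mix N v (P k)))"
  shows "0 < geo_mix N (W (k-1)) (P k) (x k) \<and> geo_mix N (W (k-1)) (P k) (x k) \<le> 1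
     \<and> fk k (W (k-1)) = - log 2 (geo_mix N (W (k-1)) (P k) (x k))
     \<and> (\<forall>j. fk k (axis j 1) = - log 2 (P k j (x k)))
     \<and> (\<forall>j. fk k (W (k-1)) - fk k (axis j 1) \<le> inner (grad (fk k) (W (k-1))) (W (k-1) - axis j 1))
     \<and> (norm (grad (fk k) (W (k-1))))\<^sup>2 \<le> real CARD('m) * B\<^sup>2 * (1 - geo_mix N (W (k-1)) (P k) (x k))\<^sup>2"
proof -
  note ef = eps_facts[OF B]
  note PMk = PM[rule_format, OF k] and Xk = X[rule_format, OF k]
  have a1: "0 < geo_mix N (W (k-1)) (P k) (x k)" by (rule geo_facts(1)[OF PMk N ef(1) Xk ef(3)])
  have a2: "geo_mix N (W (k-1)) (P k) (x k) \<le> 1" by (rule geo_facts(2)[OF PMk N ef(1) Xk ef(3)])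
  have a3: "fk k (W (k-1)) = - log 2 (geo_mix N (W (k-1)) (P k) (x k))"
    unfolding fk_def by (rule geo_facts(3)[OF PMk N ef(1) Xk ef(3)])
  have a4: "\<forall>j. fk k (axis j 1) = - log 2 (P k j (x k))"
    unfolding fk_def by (intro allI, rule geo_facts(4)[OF PMk N ef(1) Xk ef(3)])
  have a5: "\<forall>j. fk k (W (k-1)) - fk k (axis j 1) \<le> inner (grad (fk k) (W (k-1))) (W (k-1) - axis j 1)"
    unfolding fk_def by (intro allI, rule geo_facts(5)[OF PMk N ef(1) Xk ef(3)])
  have a6: "(norm (grad (fk k) (W (k-1))))\<^sup>2 \<le> real CARD('m) * B\<^sup>2 * (1 - geo_mix N (W (k-1)) (P k) (x k))\<^sup>2"
    unfolding fk_def by (rule geo_facts(6)[OF PMk N ef(1) Xk ef(3)])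
  show ?thesis using a1 a2 a3 a4 a5 a6 by blast
qed

lemma case_iii:
  fixes N n :: nat and B :: real and x :: "nat \<Rightarrow> nat"
    and P :: "nat \<Rightarrow> 'm::finite \<Rightarrow> nat \<Rightarrow> real" and w1 :: "real^'m"
  assumes N: "1 < N" and B: "1 \<le> B"
    and X: "\<forall>k\<in>{1..n}. x k \<in> {1..N}"
    and PM: "\<forall>k\<in>{1..n}. prob_matrix N (2 powr (- B)) (P k)"
    and w1: "w1 \<in> prob_simplex" and seg: "segmentation n s t"
  shows "ogd_codelen (geo_mix N) prob_simplex w1 (10 / (7 * CARD('m) * B\<^sup>2)) n x P
         \<le> 2 * seg_cost x P s t + 7 * CARD('m) * s * B\<^sup>2 / 5"
proof -
  define \<alpha> :: real where "\<alpha> = 10 / (7 * CARD('m) * B\<^sup>2)"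
  define m :: real where "m = real CARD('m)"
  have m0: "0 < m" unfolding m_def by simp
  have am: "\<alpha> = 10 / (7 * m * B\<^sup>2)" unfolding \<alpha>_def m_def by simp
  have al: "0 < \<alpha>" unfolding am using B m0 by simp
  define W where "W = ogd_w (geo_mix N) prob_simplex w1 \<alpha> x P"
  define fk where "fk = (\<lambda>k v. codelen (x k) (geo_mix N v (P k)))"
  have LF: "\<And>k. k \<in> {1..n} \<Longrightarrow> 0 < geo_mix N (W (k-1)) (P k) (x k) \<and> geo_mix N (W (k-1)) (P k) (x k) \<le> 1
     \<and> fk k (W (k-1)) = - log 2 (geo_mix N (W (k-1)) (P k) (x k))
     \<and> (\<forall>j. fk k (axis j 1) = - log 2 (P k j (x k)))
     \<and> (\<forall>j. fk k (W (k-1)) - fk k (axis j 1) \<le> inner (grad (fk k) (W (k-1))) (W (k-1) - axis j 1))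
     \<and> (norm (grad (fk k) (W (k-1))))\<^sup>2 \<le> m * B\<^sup>2 * (1 - geo_mix N (W (k-1)) (P k) (x k))\<^sup>2"
    unfolding fk_def W_def m_def by (rule geo_LF[OF N B X PM w1])
  have gen: "ogd_codelen (geo_mix N) prob_simplex w1 \<alpha> n x P \<le> seg_cost x P s t + s / \<alpha>
            + (\<Sum>k=1..n. \<alpha>/2 * (norm (grad (fk k) (W (k-1))))\<^sup>2)"
  proof -
    have conv: "\<And>k j. k \<in> {1..n} \<Longrightarrow> fk k (W (k-1)) - fk k (axis j 1) \<le> inner (grad (fk k) (W (k-1))) (W (k-1) - axis j 1)"
      using LF by blast
    have vert: "\<And>k j. k \<in> {1..n} \<Longrightarrow> fk k (axis j 1) = - log 2 (P k j (x k))" using LF by blast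
    show ?thesis unfolding fk_def W_def
      by (rule ogd_generic[OF al seg w1 conv[unfolded fk_def W_def] vert[unfolded fk_def W_def]])
  qed
  have L: "ogd_codelen (geo_mix N) prob_simplex w1 \<alpha> n x P = (\<Sum>k=1..n. fk k (W (k-1)))"
    unfolding ogd_codelen_def fk_def W_def ..
  have "(\<Sum>k=1..n. \<alpha>/2 * (norm (grad (fk k) (W (k-1))))\<^sup>2) \<le> (\<Sum>k=1..n. fk k (W (k-1)) / 2)"
  proof (rule sum_mono)
    fix k assume k: "k \<in> {1..n}"
    note lf = LF[OF k]
    define q where "q = geo_mix N (W (k-1)) (P k) (x k)"
    have q: "0 < q" "q \<le> 1" using lf unfolding q_def by auto
    have G: "(norm (grad (fk k) (W (k-1))))\<^sup>2 \<le> m * B\<^sup>2 * (1 - q)\<^sup>2" using lf unfolding q_def by simp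
    have "\<alpha> * (norm (grad (fk k) (W (k-1))))\<^sup>2 \<le> \<alpha> * (m * B\<^sup>2 * (1 - q)\<^sup>2)"
      using G al by (intro mult_left_mono) auto
    also have "\<dots> = 10 / 7 * (1 - q)\<^sup>2" unfolding am using m0 B by (simp add: field_simps)
    also have "\<dots> \<le> 10 / 7 * (1 - q)"
    proof -
      have "(1 - q)\<^sup>2 \<le> (1 - q) * 1" unfolding power2_eq_square using q by (intro mult_left_mono) auto
      then show ?thesis by simp
    qed
    also have "\<dots> \<le> 10 / 7 * (- ln q)"
    proof -
      have "ln q \<le> q - 1" using q by (intro ln_le_minus_one) auto
      then show ?thesis by simp
    qed
    also have "\<dots> \<le> - ln q / ln 2"
    proof -
      have lq: "0 \<le> - ln q" using q by simp
      have "10 / 7 \<le> 1 / ln (2::real)" using ln2_upper by (simp add: le_divide_eq)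
      then have "10 / 7 * (- ln q) \<le> 1 / ln 2 * (- ln q)" using lq by (intro mult_right_mono) auto
      then show ?thesis by simp
    qed
    also have "\<dots> = fk k (W (k-1))" using lf unfolding q_def by (simp add: log_def)
    finally show "\<alpha>/2 * (norm (grad (fk k) (W (k-1))))\<^sup>2 \<le> fk k (W (k-1)) / 2" by simp
  qed
  also have "\<dots> = ogd_codelen (geo_mix N) prob_simplex w1 \<alpha> n x P / 2"
    unfolding L by (simp add: sum_divide_distrib)
  finally have "ogd_codelen (geo_mix N) prob_simplex w1 \<alpha> n x P \<le> 2 * seg_cost x P s t + 2 * (s / \<alpha>)"
    using gen by linarith
  also have "2 * seg_cost x P s t + 2 * (s / \<alpha>) = 2 * seg_cost x P s t + 7 * CARD('m) * s * B\<^sup>2 / 5"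
    unfolding \<alpha>_def using B by (simp add: field_simps)
  finally show ?thesis unfolding \<alpha>_def .
qed

lemma case_iv:
  fixes N n :: nat and B :: real and x :: "nat \<Rightarrow> nat"
    and P :: "nat \<Rightarrow> 'm::finite \<Rightarrow> nat \<Rightarrow> real" and w1 :: "real^'m"
  assumes N: "1 < N" and B: "1 \<le> B" and n1: "1 \<le> n"
    and X: "\<forall>k\<in>{1..n}. x k \<in> {1..N}"
    and PM: "\<forall>k\<in>{1..n}. prob_matrix N (2 powr (- B)) (P k)"
    and w1: "w1 \<in> prob_simplex" and seg: "segmentation n s t"
  shows "ogd_codelen (geo_mix N) prob_simplex w1 ((10 / sqrt n) / (7 * CARD('m) * B\<^sup>2)) n x P
         \<le> seg_cost x P s t + 19 * CARD('m) * s * B\<^sup>2 / 10 * sqrt n"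
proof -
  define \<alpha> :: real where "\<alpha> = (10 / sqrt n) / (7 * CARD('m) * B\<^sup>2)"
  define m :: real where "m = real CARD('m)"
  have m1: "1 \<le> m" unfolding m_def by simp
  have m0: "0 < m" using m1 by simp
  have sn: "0 < sqrt (real n)" "1 \<le> sqrt (real n)" using n1 by auto
  have am: "\<alpha> = (10 / sqrt n) / (7 * m * B\<^sup>2)" unfolding \<alpha>_def m_def by simp
  have al: "0 < \<alpha>" unfolding am using B m0 sn by simp
  define W where "W = ogd_w (geo_mix N) prob_simplex w1 \<alpha> x P"
  define fk where "fk = (\<lambda>k v. codelen (x k) (geo_mix N v (P k)))"
  have LF: "\<And>k. k \<in> {1..n} \<Longrightarrow> 0 < geo_mix N (W (k-1)) (P k) (x k) \<and> geo_mix N (W (k-1)) (P k) (x k) \<le> 1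
     \<and> fk k (W (k-1)) = - log 2 (geo_mix N (W (k-1)) (P k) (x k))
     \<and> (\<forall>j. fk k (axis j 1) = - log 2 (P k j (x k)))
     \<and> (\<forall>j. fk k (W (k-1)) - fk k (axis j 1) \<le> inner (grad (fk k) (W (k-1))) (W (k-1) - axis j 1))
     \<and> (norm (grad (fk k) (W (k-1))))\<^sup>2 \<le> m * B\<^sup>2 * (1 - geo_mix N (W (k-1)) (P k) (x k))\<^sup>2"
    unfolding fk_def W_def m_def by (rule geo_LF[OF N B X PM w1])
  have gen: "ogd_codelen (geo_mix N) prob_simplex w1 \<alpha> n x P \<le> seg_cost x P s t + s / \<alpha>
            + (\<Sum>k=1..n. \<alpha>/2 * (norm (grad (fk k) (W (k-1))))\<^sup>2)"
  proof -
    have conv: "\<And>k j. k \<in> {1..n} \<Longrightarrow> fk k (W (k-1)) - fk k (axis j 1) \<le> inner (grad (fk k) (W (k-1))) (W (k-1) - axis j 1)"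
      using LF by blast
    have vert: "\<And>k j. k \<in> {1..n} \<Longrightarrow> fk k (axis j 1) = - log 2 (P k j (x k))" using LF by blast
    show ?thesis unfolding fk_def W_def
      by (rule ogd_generic[OF al seg w1 conv[unfolded fk_def W_def] vert[unfolded fk_def W_def]])
  qed
  have "(\<Sum>k=1..n. \<alpha>/2 * (norm (grad (fk k) (W (k-1))))\<^sup>2) \<le> (\<Sum>k=1..n. 5 / (7 * sqrt n))"
  proof (rule sum_mono)
    fix k assume k: "k \<in> {1..n}"
    note lf = LF[OF k]
    define q where "q = geo_mix N (W (k-1)) (P k) (x k)"
    have q: "0 < q" "q \<le> 1" using lf unfolding q_def by auto
    have G: "(norm (grad (fk k) (W (k-1))))\<^sup>2 \<le> m * B\<^sup>2 * (1 - q)\<^sup>2" using lf unfolding q_def by simp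
    have "(1 - q)\<^sup>2 \<le> 1" using q by (simp add: power_le_one)
    then have "m * B\<^sup>2 * (1 - q)\<^sup>2 \<le> m * B\<^sup>2 * 1" using m0 by (intro mult_left_mono) auto
    then have G2: "(norm (grad (fk k) (W (k-1))))\<^sup>2 \<le> m * B\<^sup>2" using G by simp
    have "\<alpha>/2 * (norm (grad (fk k) (W (k-1))))\<^sup>2 \<le> \<alpha>/2 * (m * B\<^sup>2)"
      using G2 al by (intro mult_left_mono) auto
    also have "\<dots> = 5 / (7 * sqrt n)" unfolding am using m0 B sn by (simp add: field_simps)
    finally show "\<alpha>/2 * (norm (grad (fk k) (W (k-1))))\<^sup>2 \<le> 5 / (7 * sqrt n)" .
  qed
  also have "\<dots> = 5 * sqrt n / 7"
  proof -
    have "real n = sqrt n * sqrt n" by simp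
    then show ?thesis using sn by (simp add: field_simps)
  qed
  finally have S: "(\<Sum>k=1..n. \<alpha>/2 * (norm (grad (fk k) (W (k-1))))\<^sup>2) \<le> 5 * sqrt n / 7" .
  have sa: "s / \<alpha> = 7 * m * s * B\<^sup>2 * sqrt n / 10"
    unfolding am using B sn by (simp add: field_simps)
  have s1: "1 \<le> real s" using seg unfolding segmentation_def by simp
  have "1 * 1 * 1 \<le> m * s * B\<^sup>2" using m1 s1 B by (intro mult_mono) (auto simp: one_le_power)
  then have msb: "1 \<le> m * s * B\<^sup>2" by simp
  have "5 * sqrt n / 7 \<le> 12 * m * s * B\<^sup>2 * sqrt n / 10"
  proof -
    have "5 * sqrt n * 10 \<le> (12 * (m * s * B\<^sup>2)) * sqrt n * 7"
      using mult_right_mono[OF msb, of "sqrt n"] sn by simp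
    then show ?thesis by (simp add: divide_simps mult_ac)
  qed
  then have "ogd_codelen (geo_mix N) prob_simplex w1 \<alpha> n x P \<le> seg_cost x P s t + 7 * m * s * B\<^sup>2 * sqrt n / 10 + 12 * m * s * B\<^sup>2 * sqrt n / 10"
    using gen S sa by linarith
  also have "seg_cost x P s t + 7 * m * s * B\<^sup>2 * sqrt n / 10 + 12 * m * s * B\<^sup>2 * sqrt n / 10 = seg_cost x P s t + 19 * CARD('m) * s * B\<^sup>2 / 10 * sqrt n"
    unfolding m_def by (simp add: field_simps)
  finally show ?thesis unfolding \<alpha>_def .
qed

theorem theorem2:
  fixes N n :: nat and B \<alpha> :: real and x :: "nat \<Rightarrow> nat"
    and P :: "nat \<Rightarrow> 'm::finite \<Rightarrow> nat \<Rightarrow> real" and w1 :: "real^'m"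
  assumes "1 < N" and "1 < CARD('m)" and "1 \<le> B" and "1 \<le> n"
    and "\<forall>k\<in>{1..n}. x k \<in> {1..N}"
    and "\<forall>k\<in>{1..n}. prob_matrix N (2 powr (- B)) (P k)"
    and "w1 \<in> prob_simplex"
  shows
   "(\<forall>s t. segmentation n s t \<longrightarrow>
       ogd_codelen lin_mix prob_simplex w1 (8 * B / (17 * CARD('m) * 4 powr B)) n x P
         \<le> 2 * seg_cost x P s t + 17 * CARD('m) * s * 4 powr B / (4 * B))
  \<and> (\<forall>s t. segmentation n s t \<longrightarrow>
       ogd_codelen lin_mix prob_simplex w1 ((8 * B / sqrt n) / (17 * CARD('m) * 4 powr B)) n x P
         \<le> seg_cost x P s t + 35 * CARD('m) * s * 4 powr B / (4 * B) * sqrt n)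
  \<and> (\<forall>s t. segmentation n s t \<longrightarrow>
       ogd_codelen (geo_mix N) prob_simplex w1 (10 / (7 * CARD('m) * B\<^sup>2)) n x P
         \<le> 2 * seg_cost x P s t + 7 * CARD('m) * s * B\<^sup>2 / 5)
  \<and> (\<forall>s t. segmentation n s t \<longrightarrow>
       ogd_codelen (geo_mix N) prob_simplex w1 ((10 / sqrt n) / (7 * CARD('m) * B\<^sup>2)) n x P
         \<le> seg_cost x P s t + 19 * CARD('m) * s * B\<^sup>2 / 10 * sqrt n)"
proof (intro conjI allI impI)
  fix s t assume seg: "segmentation n s t"
  show "ogd_codelen lin_mix prob_simplex w1 (8 * B / (17 * CARD('m) * 4 powr B)) n x P
         \<le> 2 * seg_cost x P s t + 17 * CARD('m) * s * 4 powr B / (4 * B)"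
    by (rule case_i[OF assms(1) assms(3) assms(5) assms(6) assms(7) seg])
next
  fix s t assume seg: "segmentation n s t"
  show "ogd_codelen lin_mix prob_simplex w1 ((8 * B / sqrt n) / (17 * CARD('m) * 4 powr B)) n x P
         \<le> seg_cost x P s t + 35 * CARD('m) * s * 4 powr B / (4 * B) * sqrt n"
    by (rule case_ii[OF assms(1) assms(3) assms(4) assms(5) assms(6) assms(7) seg])
next
  fix s t assume seg: "segmentation n s t"
  show "ogd_codelen (geo_mix N) prob_simplex w1 (10 / (7 * CARD('m) * B\<^sup>2)) n x P
         \<le> 2 * seg_cost x P s t + 7 * CARD('m) * s * B\<^sup>2 / 5"
    by (rule case_iii[OF assms(1) assms(3) assms(5) assms(6) assms(7) seg])
next
  fix s t assume seg: "segmentation n s t"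
  show "ogd_codelen (geo_mix N) prob_simplex w1 ((10 / sqrt n) / (7 * CARD('m) * B\<^sup>2)) n x P
         \<le> seg_cost x P s t + 19 * CARD('m) * s * B\<^sup>2 / 10 * sqrt n"
    by (rule case_iv[OF assms(1) assms(3) assms(4) assms(5) assms(6) assms(7) seg])
qed

end
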